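(* Let $(\mathcal M,X,\bot)$ be a concurrent system with characteristic root $r$, and let $\rho$ be the spectral radius of its ADSC. Then $r=1/\rho$ if $\rho\neq0$, and $r=+\infty$ if $\rho=0$.
   Context: A trace monoid $\mathcal M=\mathcal M(\Sigma,I)$ is $\langle\Sigma\mid ab=ba\ ((a,b)\in I)\rangle$, $\Sigma$ finite, $I$ irreflexive symmetric; $|x|$ is length. A clique is a trace of pairwise distinct letters pairwise in $I$; $\mathfrak C$ is the set of nonempty cliques; for $c,c'\in\mathfrak C$, $c\to c'$ means every letter of $c'$ is in relation $(\Sigma\times\Sigma)\setminus I$ with some letter of $c$. A concurrent system $(\mathcal M,X,\bot)$: $X$ finite, $\bot\notin X$, right action of $\mathcal M$ on $X\cup\{\bot\}$ with $\bot\cdot x=\bot$. The characteristic root $r\in(0,+\infty]$ is the minimum over $\alpha,\beta\in X$ of the radius of convergence of $\sum_n\#\{x:|x|=n,\ \alpha\cdot x=\beta\}z^n$. $\mathfrak C_\alpha=\{c\in\mathfrak C:\alpha\cdot c\ne\bot\}$. DSC: nodes $(\alpha,c)$, $c\in\mathfrak C_\alpha$, arc $(\alpha,c)\to(\beta,d)$ iff $\beta=\alpha\cdot c$ and $c\to d$. ADSC: nodes $(\alpha,c,i)$ with $(\alpha,c)$ a DSC node and $1\le i\le|c|$; arcs $(\alpha,c,i)\to(\alpha,c,i+1)$, and $(\alpha,c,|c|)\to(\beta,d,1)$ whenever $(\alpha,c)\to(\beta,d)$ in DSC. The spectral radius of a digraph is the spectral radius of its $\{0,1\}$ adjacency matrix.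 *)

theory Defs
  imports "HOL-Analysis.Analysis" "Jordan_Normal_Form.Spectral_Radius"
begin

text \<open>The trace monoid M(Sg, I) is represented by words over Sg modulo the
  congruence generated by ab = ba for (a,b) in I, i.e. the reflexive transitive
  closure of swapping two adjacent independent letters.\<close>

definition trace_swap :: "('a \<times> 'a) set \<Rightarrow> ('a list \<times> 'a list) set" where
  "trace_swap I = {(u @ [a, b] @ v, u @ [b, a] @ v) | u v a b. (a, b) \<in> I}"

definition trace_eq :: "('a \<times> 'a) set \<Rightarrow> ('a list \<times> 'a list) set" where
  "trace_eq I = (trace_swap I)\<^sup>*"

definition trace_monoid_data :: "'a set \<Rightarrow> ('a \<times> 'a) set \<Rightarrow> bool" where
  "trace_monoid_data Sg I \<longleftrightarrow> finite Sg \<and> I \<subseteq> Sg \<times> Sg \<and> irrefl I \<and> sym I"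

text \<open>States X with an extra sink state bot, encoded as the option type:
  Some x for x in X, None for bot.\<close>

definition act :: "('s option \<Rightarrow> 'a \<Rightarrow> 's option) \<Rightarrow> 's option \<Rightarrow> 'a list \<Rightarrow> 's option" where
  "act delta s w = foldl delta s w"

definition concurrent_system ::
  "'a set \<Rightarrow> ('a \<times> 'a) set \<Rightarrow> 's set \<Rightarrow> ('s option \<Rightarrow> 'a \<Rightarrow> 's option) \<Rightarrow> bool" where
  "concurrent_system Sg I X delta \<longleftrightarrow>
     trace_monoid_data Sg I \<and> finite X \<and>
     (\<forall>a \<in> Sg. delta None a = None) \<and>
     (\<forall>x \<in> X. \<forall>a \<in> Sg. delta (Some x) a \<in> insert None (Some ` X)) \<and>
     (\<forall>s \<in> insert None (Some ` X). \<forall>u \<in> lists Sg. \<forall>v \<in> lists Sg.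
        (u, v) \<in> trace_eq I \<longrightarrow> act delta s u = act delta s v)"

definition trace_count ::
  "'a set \<Rightarrow> ('a \<times> 'a) set \<Rightarrow> ('s option \<Rightarrow> 'a \<Rightarrow> 's option) \<Rightarrow> 's \<Rightarrow> 's \<Rightarrow> nat \<Rightarrow> nat" where
  "trace_count Sg I delta \<alpha> \<beta> n =
     card ({w \<in> lists Sg. length w = n \<and> act delta (Some \<alpha>) w = Some \<beta>} // trace_eq I)"

definition characteristic_root ::
  "'a set \<Rightarrow> ('a \<times> 'a) set \<Rightarrow> 's set \<Rightarrow> ('s option \<Rightarrow> 'a \<Rightarrow> 's option) \<Rightarrow> ereal" where
  "characteristic_root Sg I X delta =
     (INF \<alpha>\<in>X. INF \<beta>\<in>X. conv_radius (\<lambda>n. real (trace_count Sg I delta \<alpha> \<beta> n)))"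

text \<open>A clique (a trace of pairwise distinct, pairwise independent letters) is
  represented by its set of letters; its length is the cardinality.\<close>

definition is_clique :: "'a set \<Rightarrow> ('a \<times> 'a) set \<Rightarrow> 'a set \<Rightarrow> bool" where
  "is_clique Sg I c \<longleftrightarrow> c \<noteq> {} \<and> c \<subseteq> Sg \<and> (\<forall>a\<in>c. \<forall>b\<in>c. a \<noteq> b \<longrightarrow> (a, b) \<in> I)"

definition clique_word :: "'a set \<Rightarrow> 'a list" where
  "clique_word c = (SOME w. distinct w \<and> set w = c)"

definition act_clique :: "('s option \<Rightarrow> 'a \<Rightarrow> 's option) \<Rightarrow> 's option \<Rightarrow> 'a set \<Rightarrow> 's option" where
  "act_clique delta s c = act delta s (clique_word c)"

definition clique_arrow :: "'a set \<Rightarrow> ('a \<times> 'a) set \<Rightarrow> 'a set \<Rightarrow> 'a set \<Rightarrow> bool" where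
  "clique_arrow Sg I c c' \<longleftrightarrow> (\<forall>b\<in>c'. \<exists>a\<in>c. (a, b) \<in> (Sg \<times> Sg) - I)"

definition DSC_nodes ::
  "'a set \<Rightarrow> ('a \<times> 'a) set \<Rightarrow> 's set \<Rightarrow> ('s option \<Rightarrow> 'a \<Rightarrow> 's option) \<Rightarrow> ('s \<times> 'a set) set" where
  "DSC_nodes Sg I X delta =
     {(\<alpha>, c). \<alpha> \<in> X \<and> is_clique Sg I c \<and> act_clique delta (Some \<alpha>) c \<noteq> None}"

definition DSC_arc ::
  "'a set \<Rightarrow> ('a \<times> 'a) set \<Rightarrow> 's set \<Rightarrow> ('s option \<Rightarrow> 'a \<Rightarrow> 's option) \<Rightarrow>
   ('s \<times> 'a set) \<Rightarrow> ('s \<times> 'a set) \<Rightarrow> bool" where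
  "DSC_arc Sg I X delta p q \<longleftrightarrow>
     p \<in> DSC_nodes Sg I X delta \<and> q \<in> DSC_nodes Sg I X delta \<and>
     act_clique delta (Some (fst p)) (snd p) = Some (fst q) \<and>
     clique_arrow Sg I (snd p) (snd q)"

definition ADSC_nodes ::
  "'a set \<Rightarrow> ('a \<times> 'a) set \<Rightarrow> 's set \<Rightarrow> ('s option \<Rightarrow> 'a \<Rightarrow> 's option) \<Rightarrow> ('s \<times> 'a set \<times> nat) set" where
  "ADSC_nodes Sg I X delta =
     {(\<alpha>, c, i). (\<alpha>, c) \<in> DSC_nodes Sg I X delta \<and> 1 \<le> i \<and> i \<le> card c}"

definition ADSC_arc ::
  "'a set \<Rightarrow> ('a \<times> 'a) set \<Rightarrow> 's set \<Rightarrow> ('s option \<Rightarrow> 'a \<Rightarrow> 's option) \<Rightarrow>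
   ('s \<times> 'a set \<times> nat) \<Rightarrow> ('s \<times> 'a set \<times> nat) \<Rightarrow> bool" where
  "ADSC_arc Sg I X delta p q \<longleftrightarrow>
     (case p of (\<alpha>, c, i) \<Rightarrow> case q of (\<beta>, d, j) \<Rightarrow>
       p \<in> ADSC_nodes Sg I X delta \<and> q \<in> ADSC_nodes Sg I X delta \<and>
       ((\<beta> = \<alpha> \<and> d = c \<and> j = i + 1) \<or>
        (i = card c \<and> j = 1 \<and> DSC_arc Sg I X delta (\<alpha>, c) (\<beta>, d))))"

text \<open>Adjacency matrix w.r.t. an arbitrary enumeration of the vertices (the spectrum
  does not depend on it); the spectral radius of the empty digraph is 0.\<close>

definition vertex_list :: "'v set \<Rightarrow> 'v list" where
  "vertex_list V = (SOME xs. distinct xs \<and> set xs = V)"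

definition adjacency_mat :: "'v set \<Rightarrow> ('v \<Rightarrow> 'v \<Rightarrow> bool) \<Rightarrow> complex mat" where
  "adjacency_mat V E = (let vs = vertex_list V in
     mat (length vs) (length vs) (\<lambda>(i, j). if E (vs ! i) (vs ! j) then 1 else 0))"

definition digraph_spectral_radius :: "'v set \<Rightarrow> ('v \<Rightarrow> 'v \<Rightarrow> bool) \<Rightarrow> real" where
  "digraph_spectral_radius V E = (if V = {} then 0 else spectral_radius (adjacency_mat V E))"

end

theory Submission
  imports Defs
begin

lemma trace_eq_refl[simp]: "(u, u) \<in> trace_eq I"
  unfolding trace_eq_def by simp

lemma trace_swap_sym: assumes "sym I" "(u, v) \<in> trace_swap I" shows "(v, u) \<in> trace_swap I"
proof -
  from assms(2) obtain u1 v1 a b where "u = u1 @ [a, b] @ v1" "v = u1 @ [b, a] @ v1" "(a, b) \<in> I"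
    unfolding trace_swap_def by blast
  moreover have "(b, a) \<in> I" using assms(1) \<open>(a, b) \<in> I\<close> by (auto dest: symD)
  ultimately show ?thesis unfolding trace_swap_def by blast
qed

lemma trace_eq_sym: assumes "sym I" "(u, v) \<in> trace_eq I" shows "(v, u) \<in> trace_eq I"
  using assms(2) unfolding trace_eq_def
proof (induction rule: rtrancl_induct)
  case base then show ?case by simp
next
  case (step y z)
  then show ?case using trace_swap_sym[OF assms(1) step(2)]
    by (meson converse_rtrancl_into_rtrancl)
qed

lemma trace_eq_trans: "(u, v) \<in> trace_eq I \<Longrightarrow> (v, w) \<in> trace_eq I \<Longrightarrow> (u, w) \<in> trace_eq I"
  unfolding trace_eq_def by simp

lemma trace_eq_append:
  assumes "(u, v) \<in> trace_eq I" shows "(p @ u @ q, p @ v @ q) \<in> trace_eq I"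
  using assms unfolding trace_eq_def
proof (induction rule: rtrancl_induct)
  case base then show ?case by simp
next
  case (step y z)
  from step(2) obtain u1 v1 a b where y: "y = u1 @ [a, b] @ v1" and z: "z = u1 @ [b, a] @ v1"
    and ab: "(a, b) \<in> I" unfolding trace_swap_def by blast
  have "(p @ y @ q, p @ z @ q) \<in> trace_swap I"
    unfolding trace_swap_def y z using ab
    by (rule_tac CollectI, rule_tac x="p @ u1" in exI, rule_tac x="v1 @ q" in exI, auto)
  then show ?case using step(3) by (meson rtrancl.rtrancl_into_rtrancl)
qed

lemma trace_eq_append1: "(u, v) \<in> trace_eq I \<Longrightarrow> (p @ u, p @ v) \<in> trace_eq I"
  using trace_eq_append[of u v I p "[]"] by simp

lemma trace_eq_append2: "(u, v) \<in> trace_eq I \<Longrightarrow> (u @ q, v @ q) \<in> trace_eq I"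
  using trace_eq_append[of u v I "[]" q] by simp

lemma trace_eq_length: "(u, v) \<in> trace_eq I \<Longrightarrow> length u = length v"
  unfolding trace_eq_def
  by (induction rule: rtrancl_induct) (auto simp: trace_swap_def)

lemma trace_eq_set: "(u, v) \<in> trace_eq I \<Longrightarrow> set u = set v"
  unfolding trace_eq_def
  by (induction rule: rtrancl_induct) (auto simp: trace_swap_def)

lemma trace_eq_swap1: "(a, b) \<in> I \<Longrightarrow> (a # b # w, b # a # w) \<in> trace_eq I"
  unfolding trace_eq_def trace_swap_def
  by (rule r_into_rtrancl, rule CollectI, rule exI[of _ "[]"], rule exI[of _ w], auto)

lemma move_right:
  assumes "\<forall>b\<in>set u. (a, b) \<in> I" "sym I"
  shows "(u @ [a], a # u) \<in> trace_eq I"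
  using assms(1)
proof (induction u)
  case Nil then show ?case by simp
next
  case (Cons b u)
  have "(b # u @ [a], b # a # u) \<in> trace_eq I"
    using trace_eq_append1[OF Cons.IH, of "[b]"] Cons.prems by simp
  moreover have "(b # a # u, a # b # u) \<in> trace_eq I"
    using Cons.prems assms(2) by (intro trace_eq_swap1) (auto dest: symD)
  ultimately show ?case by (auto intro: trace_eq_trans)
qed

lemma move_left:
  assumes "\<forall>b\<in>set u. (a, b) \<in> I" "sym I"
  shows "(a # u, u @ [a]) \<in> trace_eq I"
  using move_right[OF assms] trace_eq_sym[OF assms(2)] by blast

lemma perm_clique:
  assumes "sym I" "distinct u" "distinct v" "set u = set v"
    "\<forall>x\<in>set u. \<forall>y\<in>set u. x \<noteq> y \<longrightarrow> (x, y) \<in> I"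
  shows "(u, v) \<in> trace_eq I"
  using assms(2-)
proof (induction v arbitrary: u)
  case Nil then show ?case by simp
next
  case (Cons b v)
  then have "b \<in> set u" by auto
  then obtain u1 u2 where u: "u = u1 @ b # u2" by (meson split_list)
  have "(u1 @ [b], b # u1) \<in> trace_eq I"
    using Cons.prems u by (intro move_right[OF _ assms(1)]) (auto dest: symD[OF assms(1)])
  then have 1: "(u, b # u1 @ u2) \<in> trace_eq I"
    using trace_eq_append2[of "u1 @ [b]" "b # u1" I u2] u by simp
  have d: "distinct (u1 @ u2)" "b \<notin> set (u1 @ u2)" using Cons.prems u by auto
  have su: "set (u1 @ u2) = set v" using Cons.prems(1,2,3) u by auto
  have "set (u1 @ u2) \<subseteq> set u" using u by auto
  then have "\<forall>x\<in>set (u1 @ u2). \<forall>y\<in>set (u1 @ u2). x \<noteq> y \<longrightarrow> (x, y) \<in> I"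
    using Cons.prems(4) by blast
  then have "(u1 @ u2, v) \<in> trace_eq I"
    using Cons.prems d su by (intro Cons.IH) auto
  then have "(b # u1 @ u2, b # v) \<in> trace_eq I" using trace_eq_append1[of _ _ I "[b]"] by simp
  with 1 show ?case by (rule trace_eq_trans)
qed

lemma clique_word: assumes "finite c" shows "distinct (clique_word c) \<and> set (clique_word c) = c"
proof -
  obtain xs where "set xs = c" "distinct xs" using finite_distinct_list[OF assms] by blast
  then show ?thesis unfolding clique_word_def by (metis (mono_tags, lifting) someI)
qed

lemma clique_word_length: "finite c \<Longrightarrow> length (clique_word c) = card c"
  using clique_word distinct_card by metis

lemma clique_word_single[simp]: "clique_word {a} = [a]"
proof -
  have "distinct (clique_word {a}) \<and> set (clique_word {a}) = {a}" by (rule clique_word) simp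
  then show ?thesis
    by (cases "clique_word {a}" rule: remdups_adj.cases) auto
qed

definition proj :: "'a \<Rightarrow> 'a \<Rightarrow> 'a list \<Rightarrow> 'a list" where
  "proj a b w = filter (\<lambda>x. x = a \<or> x = b) w"

lemma proj_trace_eq:
  assumes "sym I" "irrefl I" "(u, v) \<in> trace_eq I" "(a, b) \<notin> I"
  shows "proj a b u = proj a b v"
  using assms(3) unfolding trace_eq_def
proof (induction rule: rtrancl_induct)
  case base then show ?case by simp
next
  case (step y z)
  from step(2) obtain u1 v1 x y' where y: "y = u1 @ [x, y'] @ v1" and z: "z = u1 @ [y', x] @ v1"
    and ab: "(x, y') \<in> I" unfolding trace_swap_def by blast
  have "x \<noteq> y'" using ab assms(2) by (auto simp: irrefl_def)
  have "\<not> ((x = a \<or> x = b) \<and> (y' = a \<or> y' = b))"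
    using ab assms(1,2,4) \<open>x \<noteq> y'\<close> by (auto dest: symD)
  then have "proj a b y = proj a b z" unfolding y z proj_def by auto
  then show ?case using step(3) by simp
qed

lemma succ_Cons: "successively P (x # xs) \<longleftrightarrow> successively P xs \<and> (xs \<noteq> [] \<longrightarrow> P x (hd xs))"
  by (cases xs) auto

locale csys =
  fixes Sg :: "'a set" and I :: "('a \<times> 'a) set" and X :: "'s set"
    and delta :: "'s option \<Rightarrow> 'a \<Rightarrow> 's option"
  assumes csys: "concurrent_system Sg I X delta"
begin

lemma finSg: "finite Sg" and IS: "I \<subseteq> Sg \<times> Sg" and irr: "irrefl I" and symI: "sym I"
  and finX: "finite X"
  and botA: "a \<in> Sg \<Longrightarrow> delta None a = None"
  and clo: "x \<in> X \<Longrightarrow> a \<in> Sg \<Longrightarrow> delta (Some x) a \<in> insert None (Some ` X)"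
  using csys unfolding concurrent_system_def trace_monoid_data_def by auto

lemma inv: assumes "s \<in> insert None (Some ` X)" "u \<in> lists Sg" "v \<in> lists Sg"
      "(u, v) \<in> trace_eq I" shows "act delta s u = act delta s v"
proof -
  have "\<forall>s \<in> insert None (Some ` X). \<forall>u \<in> lists Sg. \<forall>v \<in> lists Sg.
        (u, v) \<in> trace_eq I \<longrightarrow> act delta s u = act delta s v"
    using csys unfolding concurrent_system_def by blast
  then show ?thesis using assms by blast
qed

lemma I_neq: "(a, b) \<in> I \<Longrightarrow> a \<noteq> b"
  using irr by (auto simp: irrefl_def)

lemma I_sym: "(a, b) \<in> I \<Longrightarrow> (b, a) \<in> I"
  using symI by (auto dest: symD)

lemma act_append: "act delta s (u @ v) = act delta (act delta s u) v"
  by (simp add: act_def)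

lemma act_Cons: "act delta s (a # v) = act delta (delta s a) v"
  by (simp add: act_def)

lemma act_None: "w \<in> lists Sg \<Longrightarrow> act delta None w = None"
  by (induction w) (auto simp: act_Cons botA act_def)

lemma act_closed: "x \<in> X \<Longrightarrow> w \<in> lists Sg \<Longrightarrow> act delta (Some x) w \<in> insert None (Some ` X)"
proof (induction w arbitrary: x)
  case Nil then show ?case by (simp add: act_def)
next
  case (Cons a w)
  have "delta (Some x) a \<in> insert None (Some ` X)" using Cons clo by auto
  then show ?case
  proof
    assume "delta (Some x) a = None" then show ?thesis using Cons act_None by (simp add: act_Cons)
  next
    assume "delta (Some x) a \<in> Some ` X"
    then obtain y where "y \<in> X" "delta (Some x) a = Some y" by auto
    then show ?thesis using Cons by (simp add: act_Cons)
  qed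
qed

definition CF :: "'a set list \<Rightarrow> bool" where
  "CF cs \<longleftrightarrow> (\<forall>c\<in>set cs. is_clique Sg I c) \<and> successively (clique_arrow Sg I) cs"

abbreviation W :: "'a set list \<Rightarrow> 'a list" where
  "W cs \<equiv> concat (map clique_word cs)"

lemma is_clique_finite: "is_clique Sg I c \<Longrightarrow> finite c"
  unfolding is_clique_def using finSg finite_subset by blast

lemma set_W: "CF cs \<Longrightarrow> set (W cs) = \<Union> (set cs)"
  unfolding CF_def using clique_word is_clique_finite by auto

lemma W_lists: "CF cs \<Longrightarrow> W cs \<in> lists Sg"
proof -
  assume a: "CF cs"
  have "\<Union> (set cs) \<subseteq> Sg" using a unfolding CF_def is_clique_def by blast
  then show ?thesis using set_W[OF a] by auto
qed

lemma CF_append: "CF (p @ q) \<longleftrightarrow> CF p \<and> CF q \<and> (p = [] \<or> q = [] \<or> clique_arrow Sg I (last p) (hd q))"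
  unfolding CF_def successively_append_iff by auto

lemma CF_Cons: "CF (c # q) \<longleftrightarrow> is_clique Sg I c \<and> CF q \<and> (q \<noteq> [] \<longrightarrow> clique_arrow Sg I c (hd q))"
  unfolding CF_def succ_Cons by auto

fun ins :: "'a \<Rightarrow> 'a set list \<Rightarrow> 'a set list" where
  "ins a [] = [{a}]"
| "ins a (d # q) = insert a d # q"

lemma ins_ne: "ins a q \<noteq> []" by (cases q) auto

lemma ins_ok:
  assumes "a \<in> Sg" "CF q" "\<forall>b\<in>\<Union>(set q). (a, b) \<in> I"
  shows "CF (ins a q) \<and> (W q @ [a], W (ins a q)) \<in> trace_eq I"
proof (cases q)
  case Nil
  have "is_clique Sg I {a}" using assms(1) by (auto simp: is_clique_def)
  then show ?thesis using Nil by (simp add: CF_def)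
next
  case (Cons d q')
  have dcl: "is_clique Sg I d" and CFq': "CF q'"
    and arr: "q' \<noteq> [] \<longrightarrow> clique_arrow Sg I d (hd q')" using assms(2) Cons by (auto simp: CF_Cons)
  have ad: "\<forall>x\<in>d. (a, x) \<in> I" using assms(3) Cons by auto
  have anot: "a \<notin> d" using ad I_neq by blast
  have cl: "is_clique Sg I (insert a d)"
    using dcl ad assms(1) unfolding is_clique_def by (auto intro: I_sym)
  have arr': "q' \<noteq> [] \<longrightarrow> clique_arrow Sg I (insert a d) (hd q')"
    using arr unfolding clique_arrow_def by blast
  have CF1: "CF (ins a q)" using Cons cl CFq' arr' by (simp add: CF_Cons)
  have fd: "finite d" using dcl is_clique_finite by blast
  have fad: "finite (insert a d)" using fd by simp
  have "\<forall>b\<in>set (W q'). (a, b) \<in> I" using assms(3) Cons set_W[OF CFq'] by auto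
  then have 1: "(W q' @ [a], a # W q') \<in> trace_eq I" by (rule move_right[OF _ symI])
  have 2: "(clique_word d @ [a], clique_word (insert a d)) \<in> trace_eq I"
    apply (rule perm_clique[OF symI])
    using clique_word[OF fd] clique_word[OF fad] anot cl unfolding is_clique_def by auto
  have "(W q @ [a], clique_word d @ a # W q') \<in> trace_eq I"
    using trace_eq_append1[OF 1, of "clique_word d"] Cons by simp
  moreover have "(clique_word d @ a # W q', clique_word (insert a d) @ W q') \<in> trace_eq I"
    using trace_eq_append2[OF 2, of "W q'"] by simp
  ultimately show ?thesis using CF1 Cons by (auto intro: trace_eq_trans)
qed

lemma arrow_ins:
  assumes "a \<in> Sg" "CF (c # q)" "x \<in> c" "(x, a) \<notin> I"
  shows "clique_arrow Sg I c (hd (ins a q))"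
proof (cases q)
  case Nil
  have "x \<in> Sg" using assms(2,3) by (auto simp: CF_Cons is_clique_def)
  then show ?thesis using Nil assms unfolding clique_arrow_def by auto
next
  case (Cons d q')
  have "x \<in> Sg" using assms(2,3) by (auto simp: CF_Cons is_clique_def)
  then show ?thesis using Cons assms unfolding clique_arrow_def by (auto simp: CF_Cons clique_arrow_def)
qed

lemma split_dep:
  "(\<forall>b\<in>\<Union>(set cs). (a, b) \<in> I) \<or>
   (\<exists>p c q. cs = p @ c # q \<and> (\<exists>x\<in>c. (x, a) \<notin> I) \<and> (\<forall>b\<in>\<Union>(set q). (a, b) \<in> I))"
proof (induction cs rule: rev_induct)
  case Nil then show ?case by simp
next
  case (snoc y ys)
  show ?case
  proof (cases "\<exists>x\<in>y. (x, a) \<notin> I")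
    case True
    then show ?thesis by (intro disjI2 exI[of _ ys] exI[of _ y] exI[of _ "[]"]) auto
  next
    case False
    then have yI: "\<forall>x\<in>y. (a, x) \<in> I" using I_sym by blast
    from snoc show ?thesis
    proof
      assume "\<forall>b\<in>\<Union> (set ys). (a, b) \<in> I" then show ?thesis using yI by auto
    next
      assume "\<exists>p c q. ys = p @ c # q \<and> (\<exists>x\<in>c. (x, a) \<notin> I) \<and> (\<forall>b\<in>\<Union> (set q). (a, b) \<in> I)"
      then obtain p c q where "ys = p @ c # q" "\<exists>x\<in>c. (x, a) \<notin> I" "\<forall>b\<in>\<Union> (set q). (a, b) \<in> I"
        by blast
      then show ?thesis using yI by (intro disjI2 exI[of _ p] exI[of _ c] exI[of _ "q @ [y]"]) auto
    qed
  qed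
qed

lemma snoc_cf:
  assumes "CF cs" "a \<in> Sg"
  shows "\<exists>cs'. CF cs' \<and> (W cs @ [a], W cs') \<in> trace_eq I"
  using split_dep[of cs a]
proof
  assume "\<forall>b\<in>\<Union> (set cs). (a, b) \<in> I"
  then show ?thesis using ins_ok[OF assms(2,1)] by blast
next
  assume "\<exists>p c q. cs = p @ c # q \<and> (\<exists>x\<in>c. (x, a) \<notin> I) \<and> (\<forall>b\<in>\<Union> (set q). (a, b) \<in> I)"
  then obtain p c q x where cs: "cs = p @ c # q" and x: "x \<in> c" "(x, a) \<notin> I"
    and qI: "\<forall>b\<in>\<Union> (set q). (a, b) \<in> I" by blast
  have CFp: "CF p" and CFcq: "CF (c # q)" and lp: "p = [] \<or> clique_arrow Sg I (last p) c"
    using assms(1) cs by (auto simp: CF_append)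
  have CFq: "CF q" and ccl: "is_clique Sg I c" using CFcq by (auto simp: CF_Cons)
  from ins_ok[OF assms(2) CFq qI] have i1: "CF (ins a q)" and i2: "(W q @ [a], W (ins a q)) \<in> trace_eq I"
    by auto
  have "clique_arrow Sg I c (hd (ins a q))" using arrow_ins[OF assms(2) CFcq x] .
  then have "CF (c # ins a q)" using i1 ccl ins_ne[of a q] by (simp add: CF_Cons)
  then have CF': "CF (p @ c # ins a q)" using CFp lp by (auto simp: CF_append)
  have "(W p @ clique_word c @ (W q @ [a]), W p @ clique_word c @ W (ins a q)) \<in> trace_eq I"
    using trace_eq_append1[OF i2, of "W p @ clique_word c"] by simp
  then have "(W cs @ [a], W (p @ c # ins a q)) \<in> trace_eq I" using cs by simp
  then show ?thesis using CF' by blast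
qed

lemma cf_exists: "w \<in> lists Sg \<Longrightarrow> \<exists>cs. CF cs \<and> (w, W cs) \<in> trace_eq I"
proof (induction w rule: rev_induct)
  case Nil
  then show ?case by (intro exI[of _ "[]"]) (simp add: CF_def)
next
  case (snoc a w)
  then obtain cs where cs: "CF cs" "(w, W cs) \<in> trace_eq I" by auto
  from snoc_cf[OF cs(1)] snoc.prems obtain cs' where "CF cs'" "(W cs @ [a], W cs') \<in> trace_eq I"
    by auto
  moreover have "(w @ [a], W cs @ [a]) \<in> trace_eq I" using trace_eq_append2[OF cs(2)] .
  ultimately show ?case by (blast intro: trace_eq_trans)
qed

end

context csys begin

abbreviation V where "V \<equiv> ADSC_nodes Sg I X delta"
abbreviation E where "E \<equiv> ADSC_arc Sg I X delta"
abbreviation D where "D \<equiv> DSC_nodes Sg I X delta"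

definition walks :: "nat \<Rightarrow> ('s \<times> 'a set \<times> nat) list set" where
  "walks m = {p. length p = m \<and> set p \<subseteq> V \<and> successively E p}"

lemma V_sub: "V \<subseteq> X \<times> Pow Sg \<times> {..card Sg}"
proof
  fix x assume "x \<in> V"
  then obtain \<alpha> c i where x: "x = (\<alpha>, c, i)" "(\<alpha>, c) \<in> D" "i \<le> card c"
    unfolding ADSC_nodes_def by auto
  then have "\<alpha> \<in> X" "c \<subseteq> Sg" unfolding DSC_nodes_def is_clique_def by auto
  moreover have "card c \<le> card Sg" using \<open>c \<subseteq> Sg\<close> finSg by (simp add: card_mono)
  ultimately show "x \<in> X \<times> Pow Sg \<times> {..card Sg}" using x by auto
qed

lemma finV: "finite V"
  using V_sub finX finSg by (meson finite_SigmaI finite_Pow_iff finite_atMost finite_subset)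

lemma fin_walks: "finite (walks m)"
proof -
  have "walks m \<subseteq> {p. set p \<subseteq> V \<and> length p = m}" unfolding walks_def by auto
  then show ?thesis using finite_lists_length_eq[OF finV] finite_subset by blast
qed

definition wordof :: "('s \<times> 'a set \<times> nat) list \<Rightarrow> 'a list" where
  "wordof p = map (\<lambda>(\<alpha>, c, i). clique_word c ! (i - 1)) p"

definition block :: "'s \<Rightarrow> 'a set \<Rightarrow> ('s \<times> 'a set \<times> nat) list" where
  "block \<alpha> c = map (\<lambda>i. (\<alpha>, c, i)) [1..<Suc (card c)]"

fun cfwalk :: "'s \<Rightarrow> 'a set list \<Rightarrow> ('s \<times> 'a set \<times> nat) list" where
  "cfwalk \<alpha> [] = []"
| "cfwalk \<alpha> (c # cs) = block \<alpha> c @ cfwalk (the (act_clique delta (Some \<alpha>) c)) cs"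

fun valid :: "'s \<Rightarrow> 'a set list \<Rightarrow> bool" where
  "valid \<alpha> [] = True"
| "valid \<alpha> (c # cs) = ((\<alpha>, c) \<in> D \<and> valid (the (act_clique delta (Some \<alpha>) c)) cs)"

lemma block_length[simp]: "length (block \<alpha> c) = card c"
  by (simp add: block_def)

lemma block_nth: "k < card c \<Longrightarrow> block \<alpha> c ! k = (\<alpha>, c, Suc k)"
  by (simp add: block_def del: upt_Suc)

lemma wordof_block: assumes "finite c" shows "wordof (block \<alpha> c) = clique_word c"
proof (rule nth_equalityI)
  show "length (wordof (block \<alpha> c)) = length (clique_word c)"
    using clique_word_length[OF assms] by (simp add: wordof_def)
  fix k assume "k < length (wordof (block \<alpha> c))"
  then have "k < card c" by (simp add: wordof_def)
  then show "wordof (block \<alpha> c) ! k = clique_word c ! k"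
    by (simp add: wordof_def block_nth)
qed

lemma wordof_append: "wordof (p @ q) = wordof p @ wordof q"
  by (simp add: wordof_def)

lemma length_wordof[simp]: "length (wordof p) = length p"
  by (simp add: wordof_def)

lemma wordof_cfwalk: "CF cs \<Longrightarrow> wordof (cfwalk \<alpha> cs) = W cs"
proof (induction cs arbitrary: \<alpha>)
  case Nil then show ?case by (simp add: wordof_def)
next
  case (Cons c cs)
  have "finite c" using Cons.prems by (auto simp: CF_Cons intro: is_clique_finite)
  then show ?case using Cons by (simp add: wordof_append wordof_block CF_Cons)
qed

lemma D_facts: assumes "(\<alpha>, c) \<in> D"
  shows "\<alpha> \<in> X" "is_clique Sg I c" "act_clique delta (Some \<alpha>) c \<noteq> None" "finite c" "card c \<ge> 1"
proof -
  show "\<alpha> \<in> X" "is_clique Sg I c" "act_clique delta (Some \<alpha>) c \<noteq> None"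
    using assms unfolding DSC_nodes_def by auto
  then show "finite c" using is_clique_finite by blast
  then show "card c \<ge> 1" using \<open>is_clique Sg I c\<close> unfolding is_clique_def
    by (simp add: Suc_leI card_gt_0_iff)
qed

lemma node_in_V: "(\<alpha>, c) \<in> D \<Longrightarrow> 1 \<le> i \<Longrightarrow> i \<le> card c \<Longrightarrow> (\<alpha>, c, i) \<in> V"
  unfolding ADSC_nodes_def by auto

lemma E_inner: "(\<alpha>, c) \<in> D \<Longrightarrow> 1 \<le> i \<Longrightarrow> i < card c \<Longrightarrow> E (\<alpha>, c, i) (\<alpha>, c, Suc i)"
  unfolding ADSC_arc_def using node_in_V by auto

lemma E_jump:
  assumes "(\<alpha>, c) \<in> D" "(\<beta>, d) \<in> D" "act_clique delta (Some \<alpha>) c = Some \<beta>" "clique_arrow Sg I c d"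
  shows "E (\<alpha>, c, card c) (\<beta>, d, 1)"
  using assms D_facts[OF assms(1)] D_facts[OF assms(2)] node_in_V[OF assms(1)] node_in_V[OF assms(2)]
  unfolding ADSC_arc_def DSC_arc_def by auto

lemma block_walk: assumes "(\<alpha>, c) \<in> D"
  shows "set (block \<alpha> c) \<subseteq> V" "successively E (block \<alpha> c)" "block \<alpha> c \<noteq> []"
    "hd (block \<alpha> c) = (\<alpha>, c, 1)" "last (block \<alpha> c) = (\<alpha>, c, card c)"
proof -
  have c1: "card c \<ge> 1" using D_facts[OF assms] by simp
  show "set (block \<alpha> c) \<subseteq> V" unfolding block_def using node_in_V[OF assms] by auto
  show "successively E (block \<alpha> c)" unfolding successively_conv_nth
    using E_inner[OF assms] by (auto simp: block_nth)
  show "block \<alpha> c \<noteq> []" using c1 by (auto simp: block_def)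
  show "hd (block \<alpha> c) = (\<alpha>, c, 1)" using c1 by (simp add: block_def hd_map del: upt_Suc)
  show "last (block \<alpha> c) = (\<alpha>, c, card c)" using c1 by (auto simp: block_def)
qed

lemma cfwalk_hd: "valid \<alpha> (c # cs) \<Longrightarrow> hd (cfwalk \<alpha> (c # cs)) = (\<alpha>, c, 1)"
  using block_walk by auto

lemma walk_cfwalk:
  "valid \<alpha> cs \<Longrightarrow> CF cs \<Longrightarrow> set (cfwalk \<alpha> cs) \<subseteq> V \<and> successively E (cfwalk \<alpha> cs)"
proof (induction cs arbitrary: \<alpha>)
  case Nil then show ?case by simp
next
  case (Cons c cs)
  define \<beta> where "\<beta> = the (act_clique delta (Some \<alpha>) c)"
  have cD: "(\<alpha>, c) \<in> D" and vr: "valid \<beta> cs" using Cons.prems by (auto simp: \<beta>_def)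
  have CFr: "CF cs" using Cons.prems by (simp add: CF_Cons)
  have IH: "set (cfwalk \<beta> cs) \<subseteq> V \<and> successively E (cfwalk \<beta> cs)" using Cons.IH[OF vr CFr] .
  have ab: "act_clique delta (Some \<alpha>) c = Some \<beta>" using D_facts(3)[OF cD] by (auto simp: \<beta>_def)
  have junc: "cfwalk \<beta> cs = [] \<or> E (last (block \<alpha> c)) (hd (cfwalk \<beta> cs))"
  proof (cases cs)
    case Nil then show ?thesis by simp
  next
    case (Cons d cs')
    have dD: "(\<beta>, d) \<in> D" using vr Cons by simp
    have "clique_arrow Sg I c d" using Cons.prems \<open>cs = d # cs'\<close> by (simp add: CF_Cons)
    then have "E (\<alpha>, c, card c) (\<beta>, d, 1)" using E_jump[OF cD dD ab] by simp
    then show ?thesis using Cons vr block_walk[OF cD] cfwalk_hd[of \<beta> d cs'] by simp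
  qed
  show ?case using block_walk[OF cD] IH junc by (simp add: \<beta>_def[symmetric] successively_append_iff)
qed

lemma valid_of_act: "\<alpha> \<in> X \<Longrightarrow> CF cs \<Longrightarrow> act delta (Some \<alpha>) (W cs) \<noteq> None \<Longrightarrow> valid \<alpha> cs"
proof (induction cs arbitrary: \<alpha>)
  case Nil then show ?case by simp
next
  case (Cons c cs)
  have ccl: "is_clique Sg I c" and CFr: "CF cs" using Cons.prems by (auto simp: CF_Cons)
  have cwl: "clique_word c \<in> lists Sg"
    using clique_word[OF is_clique_finite[OF ccl]] ccl unfolding is_clique_def by auto
  have Wl: "W cs \<in> lists Sg" using W_lists[OF CFr] .
  have "act delta (Some \<alpha>) (clique_word c) \<noteq> None"
  proof
    assume "act delta (Some \<alpha>) (clique_word c) = None"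
    then have "act delta (Some \<alpha>) (W (c # cs)) = None" using act_None[OF Wl] by (simp add: act_append)
    then show False using Cons.prems by simp
  qed
  moreover have "act delta (Some \<alpha>) (clique_word c) \<in> insert None (Some ` X)"
    using act_closed[OF Cons.prems(1) cwl] .
  ultimately obtain \<beta> where b: "\<beta> \<in> X" "act delta (Some \<alpha>) (clique_word c) = Some \<beta>" by auto
  have "act delta (Some \<beta>) (W cs) \<noteq> None" using Cons.prems(3) b by (simp add: act_append)
  then have "valid \<beta> cs" using Cons.IH[OF b(1) CFr] by simp
  moreover have "(\<alpha>, c) \<in> D" unfolding DSC_nodes_def act_clique_def using Cons.prems(1) ccl b by auto
  ultimately show ?case using b by (simp add: act_clique_def)
qed

lemma final_state: "\<alpha> \<in> X \<Longrightarrow> valid \<alpha> cs \<Longrightarrow> CF cs \<Longrightarrow> \<exists>\<beta>\<in>X. act delta (Some \<alpha>) (W cs) = Some \<beta>"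
proof (induction cs arbitrary: \<alpha>)
  case Nil then show ?case by (simp add: act_def)
next
  case (Cons c cs)
  have cD: "(\<alpha>, c) \<in> D" using Cons.prems by simp
  have ccl: "is_clique Sg I c" and CFr: "CF cs" using Cons.prems by (auto simp: CF_Cons)
  have cwl: "clique_word c \<in> lists Sg"
    using clique_word[OF is_clique_finite[OF ccl]] ccl unfolding is_clique_def by auto
  have "act delta (Some \<alpha>) (clique_word c) \<noteq> None" using D_facts(3)[OF cD] by (simp add: act_clique_def)
  moreover have "act delta (Some \<alpha>) (clique_word c) \<in> insert None (Some ` X)"
    using act_closed[OF Cons.prems(1) cwl] .
  ultimately obtain \<beta> where b: "\<beta> \<in> X" "act delta (Some \<alpha>) (clique_word c) = Some \<beta>" by auto
  have "valid \<beta> cs" using Cons.prems b by (simp add: act_clique_def)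
  then show ?case using Cons.IH[OF b(1) _ CFr] b by (simp add: act_append)
qed

lemma class_eq: "(w1, x) \<in> trace_eq I \<Longrightarrow> (w2, x) \<in> trace_eq I \<Longrightarrow> trace_eq I `` {w1} = trace_eq I `` {w2}"
  using trace_eq_sym[OF symI] trace_eq_trans by blast

lemma count_le_walks:
  assumes "\<alpha> \<in> X"
  shows "trace_count Sg I delta \<alpha> \<beta> n \<le> card (walks n)"
proof -
  define A where "A = {w \<in> lists Sg. length w = n \<and> act delta (Some \<alpha>) w = Some \<beta>}"
  define Q where "Q = A // trace_eq I"
  have ex: "\<exists>p. p \<in> walks n \<and> wordof p \<in> C" if "C \<in> Q" for C
  proof -
    from that obtain w where w: "w \<in> A" "C = trace_eq I `` {w}" unfolding Q_def by (auto elim: quotientE)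
    have wl: "w \<in> lists Sg" using w by (simp add: A_def)
    from cf_exists[OF wl] obtain cs where cs: "CF cs" "(w, W cs) \<in> trace_eq I" by blast
    have "act delta (Some \<alpha>) (W cs) = act delta (Some \<alpha>) w"
      using inv[of "Some \<alpha>" "W cs" w] assms W_lists[OF cs(1)] wl trace_eq_sym[OF symI cs(2)] by auto
    then have "act delta (Some \<alpha>) (W cs) = Some \<beta>" using w by (simp add: A_def)
    then have v: "valid \<alpha> cs" using valid_of_act[OF assms cs(1)] by simp
    have "cfwalk \<alpha> cs \<in> walks n"
      using walk_cfwalk[OF v cs(1)] trace_eq_length[OF cs(2)] w(1) wordof_cfwalk[OF cs(1), of \<alpha>]
      unfolding walks_def A_def by (metis (mono_tags, lifting) length_wordof mem_Collect_eq)
    moreover have "wordof (cfwalk \<alpha> cs) \<in> C" using wordof_cfwalk[OF cs(1)] cs(2) w(2) by simp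
    ultimately show ?thesis by blast
  qed
  define f where "f C = (SOME p. p \<in> walks n \<and> wordof p \<in> C)" for C
  have f: "f C \<in> walks n \<and> wordof (f C) \<in> C" if "C \<in> Q" for C
    unfolding f_def using someI_ex[OF ex[OF that]] .
  have "inj_on f Q"
  proof
    fix C1 C2 assume c: "C1 \<in> Q" "C2 \<in> Q" "f C1 = f C2"
    from c(1) obtain w1 where w1: "C1 = trace_eq I `` {w1}" unfolding Q_def by (auto elim: quotientE)
    from c(2) obtain w2 where w2: "C2 = trace_eq I `` {w2}" unfolding Q_def by (auto elim: quotientE)
    have "(w1, wordof (f C1)) \<in> trace_eq I" using f[OF c(1)] w1 by simp
    moreover have "(w2, wordof (f C1)) \<in> trace_eq I" using f[OF c(2)] w2 c(3) by simp
    ultimately show "C1 = C2" using w1 w2 class_eq by blast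
  qed
  moreover have "f ` Q \<subseteq> walks n" using f by blast
  ultimately have "card Q \<le> card (walks n)" using card_inj_on_le fin_walks by blast
  then show ?thesis unfolding trace_count_def Q_def A_def .
qed

end

context csys begin

abbreviation lastlev :: "('s \<times> 'a set \<times> nat) \<Rightarrow> bool" where
  "lastlev x \<equiv> snd (snd x) = card (fst (snd x))"

lemma E_nodes: "E x y \<Longrightarrow> x \<in> V \<and> y \<in> V"
  unfolding ADSC_arc_def by (cases x; cases y) auto

lemma V_D: "(\<alpha>, c, i) \<in> V \<Longrightarrow> (\<alpha>, c) \<in> D \<and> 1 \<le> i \<and> i \<le> card c"
  unfolding ADSC_nodes_def by auto

lemma E_from_inner: "E (\<alpha>, c, i) y \<Longrightarrow> i < card c \<Longrightarrow> y = (\<alpha>, c, Suc i)"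
  unfolding ADSC_arc_def by (cases y) auto

lemma E_from_last:
  assumes "E (\<alpha>, c, card c) y"
  shows "\<exists>\<beta> d. y = (\<beta>, d, 1) \<and> DSC_arc Sg I X delta (\<alpha>, c) (\<beta>, d)"
proof -
  obtain \<beta> d j where y: "y = (\<beta>, d, j)" by (cases y) auto
  have "(\<beta>, d, j) \<in> V" using E_nodes[OF assms] y by simp
  then have "j \<le> card d" using V_D by blast
  then show ?thesis using assms y unfolding ADSC_arc_def by auto
qed

lemma block_prefix:
  assumes "successively E p" "set p \<subseteq> V" "p \<noteq> []" "hd p = (\<alpha>, c, i)" "i \<le> card c"
    "lastlev (last p)"
  shows "card c - i + 1 \<le> length p \<and> take (card c - i + 1) p = map (\<lambda>t. (\<alpha>, c, t)) [i..<Suc (card c)]"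
  using assms
proof (induction p arbitrary: i)
  case Nil then show ?case by simp
next
  case (Cons x p)
  have x: "x = (\<alpha>, c, i)" using Cons.prems by simp
  show ?case
  proof (cases p)
    case Nil
    then have "i = card c" using Cons.prems x by simp
    then show ?thesis using Nil x by simp
  next
    case Cons2: (Cons y p')
    have Exy: "E x y" using Cons.prems(1) Cons2 by simp
    show ?thesis
    proof (cases "i < card c")
      case True
      have y: "y = (\<alpha>, c, Suc i)" using E_from_inner Exy x True by blast
      have IH: "card c - Suc i + 1 \<le> length p \<and>
          take (card c - Suc i + 1) p = map (\<lambda>t. (\<alpha>, c, t)) [Suc i..<Suc (card c)]"
        using Cons.prems Cons2 y True by (intro Cons.IH) (auto simp: succ_Cons)
      have e: "card c - i + 1 = Suc (card c - Suc i + 1)" using True by simp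
      have u: "[i..<Suc (card c)] = i # [Suc i..<Suc (card c)]" using True by (simp add: upt_conv_Cons)
      show ?thesis using IH x unfolding e u by simp
    next
      case False
      then have "i = card c" using Cons.prems by simp
      then show ?thesis using x by simp
    qed
  qed
qed

lemma decomp:
  "successively E p \<Longrightarrow> set p \<subseteq> V \<Longrightarrow> p \<noteq> [] \<Longrightarrow> hd p = (\<alpha>, c, 1) \<Longrightarrow> lastlev (last p) \<Longrightarrow>
   \<exists>cs. CF cs \<and> valid \<alpha> cs \<and> p = cfwalk \<alpha> cs \<and> cs \<noteq> [] \<and> hd cs = c"
proof (induction "length p" arbitrary: p \<alpha> c rule: less_induct)
  case less
  have "hd p \<in> V" using less.prems(2,3) by auto
  then have cD: "(\<alpha>, c) \<in> D" using less.prems(4) V_D by auto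
  have c1: "1 \<le> card c" using D_facts[OF cD] by simp
  have bp: "card c \<le> length p \<and> take (card c) p = block \<alpha> c"
    using block_prefix[OF less.prems(1-4) c1 less.prems(5)] c1 by (simp add: block_def)
  define rest where "rest = drop (card c) p"
  have p: "p = block \<alpha> c @ rest" using bp unfolding rest_def by (metis append_take_drop_id)
  show ?case
  proof (cases "rest = []")
    case True
    have "CF [c]" using D_facts[OF cD] by (simp add: CF_def)
    moreover have "valid \<alpha> [c]" using cD by simp
    ultimately show ?thesis using p True by (intro exI[of _ "[c]"]) simp
  next
    case False
    have succ: "successively E rest" "E (last (block \<alpha> c)) (hd rest)"
      using less.prems(1) False block_walk(3)[OF cD] unfolding p successively_append_iff by auto
    then have "E (\<alpha>, c, card c) (hd rest)" using block_walk(5)[OF cD] by simp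
    then obtain \<beta> d where y: "hd rest = (\<beta>, d, 1)" and arc: "DSC_arc Sg I X delta (\<alpha>, c) (\<beta>, d)"
      using E_from_last by blast
    have ab: "act_clique delta (Some \<alpha>) c = Some \<beta>" and ar: "clique_arrow Sg I c d"
      and dD: "(\<beta>, d) \<in> D"
      using arc unfolding DSC_arc_def by auto
    have "set rest \<subseteq> V" using less.prems(2) p by auto
    moreover have "lastlev (last rest)" using less.prems(5) p False by simp
    moreover have "length rest < length p" using p c1 by simp
    ultimately obtain cs where cs: "CF cs" "valid \<beta> cs" "rest = cfwalk \<beta> cs" "cs \<noteq> []" "hd cs = d"
      using less.hyps succ(1) False y by blast
    have "CF (c # cs)" using cs D_facts[OF cD] ar by (simp add: CF_Cons)
    moreover have "valid \<alpha> (c # cs)" using cD cs ab by simp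
    moreover have "p = cfwalk \<alpha> (c # cs)" using p cs ab by simp
    ultimately show ?thesis by (intro exI[of _ "c # cs"]) simp
  qed
qed

subsection \<open>Uniqueness of the Cartier-Foata decomposition\<close>

lemma proj_append: "proj a b (u @ v) = proj a b u @ proj a b v"
  by (simp add: proj_def)

lemma set_proj: "set (proj a b u) = set u \<inter> {a, b}"
  by (auto simp: proj_def)

lemma hd_in_set_proj: "proj a b u \<noteq> [] \<Longrightarrow> hd (proj a b u) \<in> set u \<inter> {a, b}"
proof -
  assume "proj a b u \<noteq> []"
  then have "hd (proj a b u) \<in> set (proj a b u)" by (rule hd_in_set)
  then show ?thesis by (simp only: set_proj)
qed

lemma cw_set: "is_clique Sg I c \<Longrightarrow> set (clique_word c) = c"
  using clique_word is_clique_finite by blast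

lemma L_first:
  assumes "CF (c # r)" "a \<in> \<Union> (set (c # r))" "a \<notin> c"
  shows "\<exists>b\<in>Sg. b \<noteq> a \<and> (a, b) \<notin> I \<and> proj a b (W (c # r)) \<noteq> [] \<and> hd (proj a b (W (c # r))) = b"
  using assms
proof (induction r arbitrary: c)
  case Nil then show ?case by simp
next
  case (Cons d r)
  have ccl: "is_clique Sg I c" and CFd: "CF (d # r)" and ar: "clique_arrow Sg I c d"
    using Cons.prems(1) by (auto simp: CF_Cons)
  have sc: "set (clique_word c) = c" using cw_set[OF ccl] .
  show ?case
  proof (cases "a \<in> d")
    case True
    then obtain x where x: "x \<in> c" "(x, a) \<in> Sg \<times> Sg - I" using ar unfolding clique_arrow_def by blast
    have xa: "x \<noteq> a" using x Cons.prems(3) by auto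
    have dep: "(a, x) \<notin> I" using x I_sym by blast
    have ne: "proj a x (clique_word c) \<noteq> []" using x sc by (auto simp: proj_def filter_empty_conv)
    have h1: "hd (proj a x (clique_word c)) = x"
    proof -
      have "hd (proj a x (clique_word c)) \<in> c \<inter> {a, x}" using hd_in_set_proj[OF ne] unfolding sc .
      then show ?thesis using Cons.prems(3) by auto
    qed
    have pa: "proj a x (W (c # d # r)) = proj a x (clique_word c) @ proj a x (W (d # r))"
      by (simp only: proj_append concat.simps list.map)
    have "proj a x (W (c # d # r)) \<noteq> []" "hd (proj a x (W (c # d # r))) = x"
      using ne h1 unfolding pa by (simp_all add: hd_append2)
    then show ?thesis using x xa dep by blast
  next
    case False
    have "a \<in> \<Union> (set (d # r))" using Cons.prems(2,3) False by simp
    from Cons.IH[OF CFd this False] obtain b where b: "b \<in> Sg" "b \<noteq> a" "(a, b) \<notin> I"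
      "proj a b (W (d # r)) \<noteq> []" "hd (proj a b (W (d # r))) = b" by blast
    have pa: "proj a b (W (c # d # r)) = proj a b (clique_word c) @ proj a b (W (d # r))"
      by (simp only: proj_append concat.simps list.map)
    have "hd (proj a b (W (c # d # r))) = b"
    proof (cases "proj a b (clique_word c) = []")
      case True then show ?thesis using b(5) unfolding pa by simp
    next
      case False
      have "hd (proj a b (clique_word c)) = b"
      proof -
        have "hd (proj a b (clique_word c)) \<in> c \<inter> {a, b}" using hd_in_set_proj[OF False] unfolding sc .
        then show ?thesis using Cons.prems(3) by auto
      qed
      then show ?thesis using False unfolding pa by (simp add: hd_append2)
    qed
    moreover have "proj a b (W (c # d # r)) \<noteq> []" using b(4) unfolding pa by simp
    ultimately show ?thesis using b by blast
  qed
qed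

lemma first_char:
  assumes "CF (c # r)" "a \<in> Sg"
  shows "a \<in> c \<longleftrightarrow> (proj a a (W (c # r)) \<noteq> [] \<and>
           (\<forall>b\<in>Sg. b \<noteq> a \<longrightarrow> (a, b) \<notin> I \<longrightarrow> hd (proj a b (W (c # r))) = a))"
proof -
  have ccl: "is_clique Sg I c" using assms(1) by (simp add: CF_Cons)
  have sc: "set (clique_word c) = c" using cw_set[OF ccl] .
  have pa: "proj a b (W (c # r)) = proj a b (clique_word c) @ proj a b (W r)" for b
    by (simp only: proj_append concat.simps list.map)
  show ?thesis
  proof
    assume ac: "a \<in> c"
    have ne: "proj a b (clique_word c) \<noteq> []" for b
    proof -
      have "a \<in> set (clique_word c)" using ac sc by simp
      then show ?thesis unfolding proj_def filter_empty_conv by blast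
    qed
    have 1: "proj a a (W (c # r)) \<noteq> []" unfolding pa using ne[of a] by simp
    have 2: "hd (proj a b (W (c # r))) = a" if "b \<in> Sg" "b \<noteq> a" "(a, b) \<notin> I" for b
    proof -
      have cI: "\<And>x y. x \<in> c \<Longrightarrow> y \<in> c \<Longrightarrow> x \<noteq> y \<Longrightarrow> (x, y) \<in> I"
        using ccl unfolding is_clique_def by blast
      have "b \<notin> c"
      proof
        assume "b \<in> c"
        then have "(a, b) \<in> I" using cI[OF ac] that(2) by metis
        then show False using that(3) by contradiction
      qed
      have "hd (proj a b (clique_word c)) \<in> c \<inter> {a, b}" using hd_in_set_proj[OF ne[of b]] unfolding sc .
      then have "hd (proj a b (clique_word c)) = a" using \<open>b \<notin> c\<close> by auto
      then show ?thesis unfolding pa using ne[of b] by (simp add: hd_append2)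
    qed
    show "proj a a (W (c # r)) \<noteq> [] \<and>
           (\<forall>b\<in>Sg. b \<noteq> a \<longrightarrow> (a, b) \<notin> I \<longrightarrow> hd (proj a b (W (c # r))) = a)"
      using 1 2 by blast
  next
    assume h: "proj a a (W (c # r)) \<noteq> [] \<and>
           (\<forall>b\<in>Sg. b \<noteq> a \<longrightarrow> (a, b) \<notin> I \<longrightarrow> hd (proj a b (W (c # r))) = a)"
    show "a \<in> c"
    proof (rule ccontr)
      assume nac: "a \<notin> c"
      have "proj a a (W (c # r)) \<noteq> []" using h by blast
      then have "a \<in> set (W (c # r))" unfolding proj_def filter_empty_conv by blast
      then have "a \<in> \<Union> (set (c # r))" unfolding set_W[OF assms(1)] .
      from L_first[OF assms(1) this nac] obtain b where b: "b \<in> Sg" "b \<noteq> a" "(a, b) \<notin> I"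
        "hd (proj a b (W (c # r))) = b" by blast
      have "hd (proj a b (W (c # r))) = a" using h b(1-3) by blast
      then show False using b(2,4) by simp
    qed
  qed
qed

lemma cf_unique:
  "CF cs1 \<Longrightarrow> CF cs2 \<Longrightarrow> (\<forall>a\<in>Sg. \<forall>b\<in>Sg. (a, b) \<notin> I \<longrightarrow> proj a b (W cs1) = proj a b (W cs2))
   \<Longrightarrow> cs1 = cs2"
proof (induction cs1 arbitrary: cs2)
  case Nil
  show ?case
  proof (cases cs2)
    case (Cons c r)
    have "is_clique Sg I c" using Nil.prems Cons by (simp add: CF_Cons)
    then obtain a where a: "a \<in> c" "a \<in> Sg" unfolding is_clique_def by auto
    have aa: "(a, a) \<notin> I" using I_neq by blast
    have "a \<in> set (W cs2)" using set_W[OF Nil.prems(2)] a Cons by auto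
    then have "proj a a (W cs2) \<noteq> []" by (auto simp: proj_def filter_empty_conv)
    moreover have "proj a a (W []) = proj a a (W cs2)" using Nil.prems(3) a aa by blast
    ultimately show ?thesis by (simp add: proj_def)
  qed simp
next
  case (Cons c1 r1)
  show ?case
  proof (cases cs2)
    case Nil
    have "is_clique Sg I c1" using Cons.prems by (simp add: CF_Cons)
    then obtain a where a: "a \<in> c1" "a \<in> Sg" unfolding is_clique_def by auto
    have aa: "(a, a) \<notin> I" using I_neq by blast
    have "a \<in> set (W (c1 # r1))" using set_W[OF Cons.prems(1)] a by auto
    then have "proj a a (W (c1 # r1)) \<noteq> []" by (auto simp: proj_def filter_empty_conv)
    moreover have "proj a a (W (c1 # r1)) = proj a a (W cs2)" using Cons.prems(3) a aa by blast
    ultimately show ?thesis using Nil by (simp add: proj_def)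
  next
    case Cons2: (Cons c2 r2)
    have cl1: "is_clique Sg I c1" and cl2: "is_clique Sg I c2"
      using Cons.prems Cons2 by (auto simp: CF_Cons)
    have c12: "c1 = c2"
    proof (rule Set.set_eqI)
      fix a
      show "a \<in> c1 \<longleftrightarrow> a \<in> c2"
      proof (cases "a \<in> Sg")
        case True
        have aa: "(a, a) \<notin> I" using I_neq by blast
        have CF1: "CF (c1 # r1)" and CF2: "CF (c2 # r2)" using Cons.prems Cons2 by auto
        define w1 where "w1 = W (c1 # r1)"
        define w2 where "w2 = W (c2 # r2)"
        have P: "\<forall>a\<in>Sg. \<forall>b\<in>Sg. (a, b) \<notin> I \<longrightarrow> proj a b w1 = proj a b w2"
          using Cons.prems(3) Cons2 unfolding w1_def w2_def by simp
        have e1: "proj a a w1 = proj a a w2" using P True aa by blast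
        have e2: "\<forall>b\<in>Sg. (a, b) \<notin> I \<longrightarrow> proj a b w1 = proj a b w2" using P True by blast
        have f1: "a \<in> c1 \<longleftrightarrow> (proj a a w1 \<noteq> [] \<and>
           (\<forall>b\<in>Sg. b \<noteq> a \<longrightarrow> (a, b) \<notin> I \<longrightarrow> hd (proj a b w1) = a))"
          unfolding w1_def by (rule first_char[OF CF1 True])
        have f2: "a \<in> c2 \<longleftrightarrow> (proj a a w2 \<noteq> [] \<and>
           (\<forall>b\<in>Sg. b \<noteq> a \<longrightarrow> (a, b) \<notin> I \<longrightarrow> hd (proj a b w2) = a))"
          unfolding w2_def by (rule first_char[OF CF2 True])
        have "(\<forall>b\<in>Sg. b \<noteq> a \<longrightarrow> (a, b) \<notin> I \<longrightarrow> hd (proj a b w1) = a) \<longleftrightarrow>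
              (\<forall>b\<in>Sg. b \<noteq> a \<longrightarrow> (a, b) \<notin> I \<longrightarrow> hd (proj a b w2) = a)" using e2 by auto
        then show ?thesis unfolding f1 f2 e1 by simp
      next
        case False then show ?thesis using cl1 cl2 unfolding is_clique_def by auto
      qed
    qed
    have "\<forall>a\<in>Sg. \<forall>b\<in>Sg. (a, b) \<notin> I \<longrightarrow> proj a b (W r1) = proj a b (W r2)"
    proof (intro ballI impI)
      fix a b assume ab: "a \<in> Sg" "b \<in> Sg" "(a, b) \<notin> I"
      have "proj a b (W (c1 # r1)) = proj a b (W (c2 # r2))" using Cons.prems(3) Cons2 ab by auto
      then show "proj a b (W r1) = proj a b (W r2)" using c12 by (simp add: proj_append)
    qed
    moreover have "CF r1" "CF r2" using Cons.prems Cons2 by (auto simp: CF_Cons)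
    ultimately have "r1 = r2" using Cons.IH by blast
    then show ?thesis using c12 Cons2 by simp
  qed
qed

end

lemma succ_join: "successively P (xs @ [x]) \<Longrightarrow> successively P (x # ys) \<Longrightarrow> successively P (xs @ x # ys)"
  unfolding successively_append_iff by auto

context csys begin

definition full :: "nat \<Rightarrow> ('s \<times> 'a set \<times> nat) list set" where
  "full m = {p \<in> walks m. p \<noteq> [] \<and> snd (snd (hd p)) = 1 \<and> lastlev (last p)}"

lemma fin_full: "finite (full m)"
  using fin_walks[of m] unfolding full_def by simp

definition Qs :: "'s \<Rightarrow> 's \<Rightarrow> nat \<Rightarrow> 'a list set set" where
  "Qs \<alpha> \<beta> l = {w \<in> lists Sg. length w = l \<and> act delta (Some \<alpha>) w = Some \<beta>} // trace_eq I"

lemma fin_Qs: "finite (Qs \<alpha> \<beta> l)"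
proof -
  let ?A = "{w \<in> lists Sg. length w = l \<and> act delta (Some \<alpha>) w = Some \<beta>}"
  have "?A \<subseteq> {w. set w \<subseteq> Sg \<and> length w = l}" by auto
  then have "finite ?A" using finite_lists_length_eq[OF finSg] finite_subset by blast
  then show ?thesis unfolding Qs_def quotient_def by simp
qed

lemma full_dec:
  assumes "p \<in> full l"
  shows "\<exists>cs. CF cs \<and> valid (fst (hd p)) cs \<and> p = cfwalk (fst (hd p)) cs \<and> fst (hd p) \<in> X"
proof -
  obtain \<alpha> c i where h: "hd p = (\<alpha>, c, i)" by (cases "hd p") auto
  have p: "successively E p" "set p \<subseteq> V" "p \<noteq> []" "i = 1" "lastlev (last p)"
    using assms h unfolding full_def walks_def by auto
  have "hd p \<in> V" using p(2,3) by auto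
  then have "\<alpha> \<in> X" using h V_D D_facts by metis
  moreover from decomp[OF p(1-3) _ p(5), of \<alpha> c] h p(4)
  obtain cs where "CF cs" "valid \<alpha> cs" "p = cfwalk \<alpha> cs" by auto
  ultimately show ?thesis using h by auto
qed

lemma full_le_T:
  "card (full l) \<le> (\<Sum>\<alpha>\<in>X. \<Sum>\<beta>\<in>X. trace_count Sg I delta \<alpha> \<beta> l)"
proof -
  define g where "g p = (fst (hd p), the (act delta (Some (fst (hd p))) (wordof p)),
     trace_eq I `` {wordof p})" for p
  have gin: "g p \<in> Sigma X (\<lambda>\<alpha>. Sigma X (\<lambda>\<beta>. Qs \<alpha> \<beta> l))" if "p \<in> full l" for p
  proof -
    from full_dec[OF that] obtain cs where cs: "CF cs" "valid (fst (hd p)) cs"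
      "p = cfwalk (fst (hd p)) cs" "fst (hd p) \<in> X" by blast
    from final_state[OF cs(4,2,1)] obtain \<beta> where b: "\<beta> \<in> X"
      "act delta (Some (fst (hd p))) (W cs) = Some \<beta>" by blast
    have wp: "wordof p = W cs" using cs(3) wordof_cfwalk[OF cs(1)] by metis
    have lp: "length p = l" using that unfolding full_def walks_def by simp
    have "length (W cs) = l" using lp wp length_wordof by metis
    then have "W cs \<in> {w \<in> lists Sg. length w = l \<and> act delta (Some (fst (hd p))) w = Some \<beta>}"
      using W_lists[OF cs(1)] b by simp
    then have "trace_eq I `` {W cs} \<in> Qs (fst (hd p)) \<beta> l" unfolding Qs_def by (rule quotientI)
    then show ?thesis unfolding g_def wp using b cs(4) by simp
  qed
  have "inj_on g (full l)"
  proof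
    fix p1 p2 assume p: "p1 \<in> full l" "p2 \<in> full l" "g p1 = g p2"
    from full_dec[OF p(1)] obtain cs1 where c1: "CF cs1" "p1 = cfwalk (fst (hd p1)) cs1" by blast
    from full_dec[OF p(2)] obtain cs2 where c2: "CF cs2" "p2 = cfwalk (fst (hd p2)) cs2" by blast
    have a: "fst (hd p1) = fst (hd p2)" using p(3) unfolding g_def by simp
    have cl: "trace_eq I `` {wordof p1} = trace_eq I `` {wordof p2}" using p(3) unfolding g_def by simp
    have "wordof p2 \<in> trace_eq I `` {wordof p1}" unfolding cl by simp
    then have tr: "(wordof p1, wordof p2) \<in> trace_eq I" by simp
    have w1: "wordof p1 = W cs1" using c1 wordof_cfwalk by metis
    have w2: "wordof p2 = W cs2" using c2 wordof_cfwalk by metis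
    have "\<forall>a\<in>Sg. \<forall>b\<in>Sg. (a, b) \<notin> I \<longrightarrow> proj a b (W cs1) = proj a b (W cs2)"
      using proj_trace_eq[OF symI irr tr] w1 w2 by auto
    then have "cs1 = cs2" using cf_unique c1(1) c2(1) by blast
    then show "p1 = p2" using c1(2) c2(2) a by metis
  qed
  moreover have "g ` full l \<subseteq> Sigma X (\<lambda>\<alpha>. Sigma X (\<lambda>\<beta>. Qs \<alpha> \<beta> l))" using gin by blast
  moreover have "finite (Sigma X (\<lambda>\<alpha>. Sigma X (\<lambda>\<beta>. Qs \<alpha> \<beta> l)))"
    using finX fin_Qs by blast
  ultimately have "card (full l) \<le> card (Sigma X (\<lambda>\<alpha>. Sigma X (\<lambda>\<beta>. Qs \<alpha> \<beta> l)))"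
    using card_inj_on_le by blast
  also have "\<dots> = (\<Sum>\<alpha>\<in>X. card (Sigma X (\<lambda>\<beta>. Qs \<alpha> \<beta> l)))"
    using finX fin_Qs by (intro card_SigmaI) auto
  also have "\<dots> = (\<Sum>\<alpha>\<in>X. \<Sum>\<beta>\<in>X. card (Qs \<alpha> \<beta> l))"
    using finX fin_Qs by (intro sum.cong refl card_SigmaI) auto
  also have "\<dots> = (\<Sum>\<alpha>\<in>X. \<Sum>\<beta>\<in>X. trace_count Sg I delta \<alpha> \<beta> l)"
    unfolding trace_count_def Qs_def ..
  finally show ?thesis .
qed

subsection \<open>Extending walks to full walks\<close>

definition pre :: "('s \<times> 'a set \<times> nat) \<Rightarrow> ('s \<times> 'a set \<times> nat) list" where
  "pre x = map (\<lambda>t. (fst x, fst (snd x), t)) [1..<snd (snd x)]"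

definition suf :: "('s \<times> 'a set \<times> nat) \<Rightarrow> ('s \<times> 'a set \<times> nat) list" where
  "suf x = map (\<lambda>t. (fst x, fst (snd x), t)) [Suc (snd (snd x))..<Suc (card (fst (snd x)))]"

definition ext :: "('s \<times> 'a set \<times> nat) list \<Rightarrow> ('s \<times> 'a set \<times> nat) list" where
  "ext p = pre (hd p) @ p @ suf (last p)"

lemma card_le_Sg: "(\<alpha>, c) \<in> D \<Longrightarrow> card c \<le> card Sg"
  using D_facts(2) finSg unfolding is_clique_def by (simp add: card_mono)

lemma pre_walk:
  assumes "x \<in> V"
  shows "set (pre x) \<subseteq> V" "successively E (pre x @ [x])" "snd (snd (hd (pre x @ [x]))) = 1"
    "length (pre x) \<le> card Sg"
proof -
  obtain \<alpha> c i where x: "x = (\<alpha>, c, i)" by (cases x) auto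
  have cD: "(\<alpha>, c) \<in> D" and i: "1 \<le> i" "i \<le> card c" using assms x V_D by auto
  have eq: "pre x @ [x] = map (\<lambda>t. (\<alpha>, c, t)) [1..<Suc i]" using i x by (simp add: pre_def)
  show "set (pre x) \<subseteq> V" unfolding pre_def x using node_in_V[OF cD] i by auto
  show "successively E (pre x @ [x])" unfolding eq successively_conv_nth
    using E_inner[OF cD] i by (auto simp del: upt_Suc)
  show "snd (snd (hd (pre x @ [x]))) = 1" unfolding eq using i by (simp add: hd_map del: upt_Suc)
  show "length (pre x) \<le> card Sg" using card_le_Sg[OF cD] i x by (simp add: pre_def)
qed

lemma suf_walk:
  assumes "x \<in> V"
  shows "set (suf x) \<subseteq> V" "successively E (x # suf x)" "lastlev (last (x # suf x))"
    "length (suf x) \<le> card Sg"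
proof -
  obtain \<alpha> c i where x: "x = (\<alpha>, c, i)" by (cases x) auto
  have cD: "(\<alpha>, c) \<in> D" and i: "1 \<le> i" "i \<le> card c" using assms x V_D by auto
  have eq: "x # suf x = map (\<lambda>t. (\<alpha>, c, t)) [i..<Suc (card c)]"
    using i x by (simp add: suf_def upt_conv_Cons del: upt_Suc)
  show "set (suf x) \<subseteq> V" unfolding suf_def x using node_in_V[OF cD] i by auto
  show "successively E (x # suf x)" unfolding eq successively_conv_nth
    using E_inner[OF cD] i by (auto simp del: upt_Suc)
  show "lastlev (last (x # suf x))" unfolding eq using i by (simp add: last_map del: upt_Suc)
  have "length (suf x) = card c - i" by (simp add: suf_def x del: upt_Suc)
  then show "length (suf x) \<le> card Sg" using card_le_Sg[OF cD] i by linarith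
qed

lemma ext_full:
  assumes "p \<in> walks m" "p \<noteq> []"
  shows "ext p \<in> full (m + length (pre (hd p)) + length (suf (last p)))"
proof -
  have w: "length p = m" "set p \<subseteq> V" "successively E p" using assms(1) unfolding walks_def by auto
  have hV: "hd p \<in> V" and lV: "last p \<in> V" using w(2) assms(2) by auto
  have p: "p = hd p # tl p" using assms(2) by simp
  have s1: "successively E (pre (hd p) @ p)"
    using succ_join[OF pre_walk(2)[OF hV], of "tl p"] w(3) p by metis
  have ne: "pre (hd p) @ p \<noteq> []" using assms(2) by simp
  have lst: "last (pre (hd p) @ p) = last p" using assms(2) by simp
  have bl: "pre (hd p) @ p = butlast (pre (hd p) @ p) @ [last p]"
    using append_butlast_last_id[OF ne] lst by metis
  have s2: "successively E (butlast (pre (hd p) @ p) @ [last p])" using s1 bl by metis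
  have "successively E (butlast (pre (hd p) @ p) @ last p # suf (last p))"
    using succ_join[OF s2 suf_walk(2)[OF lV]] .
  then have succ: "successively E (ext p)" unfolding ext_def using bl
    by (metis append.assoc append_Cons append_Nil)
  have sV: "set (ext p) \<subseteq> V" unfolding ext_def using pre_walk(1)[OF hV] suf_walk(1)[OF lV] w(2) by auto
  have len: "length (ext p) = m + length (pre (hd p)) + length (suf (last p))"
    unfolding ext_def using w(1) by simp
  have hd1: "hd (ext p) = hd (pre (hd p) @ [hd p])"
    unfolding ext_def using assms(2) by (cases "pre (hd p)") auto
  have last1: "last (ext p) = last (last p # suf (last p))"
    unfolding ext_def using assms(2) by (cases "suf (last p)" rule: rev_cases) auto
  have "ext p \<noteq> []" unfolding ext_def using assms(2) by simp
  moreover have "snd (snd (hd (ext p))) = 1" using hd1 pre_walk(3)[OF hV] by simp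
  moreover have "lastlev (last (ext p))" using last1 suf_walk(3)[OF lV] by simp
  ultimately show ?thesis unfolding full_def walks_def using succ sV len by blast
qed

lemma walks_le_full:
  assumes "1 \<le> m"
  shows "card (walks m) \<le> (\<Sum>j<2 * (card Sg + 1). (card Sg + 1) * card (full (m + j)))"
proof -
  define K where "K = card Sg + 1"
  define h where "h p = (length (pre (hd p)), ext p)" for p
  have ne: "p \<noteq> []" if "p \<in> walks m" for p using that assms unfolding walks_def by auto
  have "h ` walks m \<subseteq> (\<Union>j<2 * K. {..<K} \<times> full (m + j))"
  proof
    fix y assume "y \<in> h ` walks m"
    then obtain p where p: "p \<in> walks m" "y = h p" by blast
    have hV: "hd p \<in> V" and lV: "last p \<in> V" using p(1) ne[OF p(1)] unfolding walks_def by auto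
    have "length (pre (hd p)) < K" using pre_walk(4)[OF hV] unfolding K_def by simp
    moreover have "length (pre (hd p)) + length (suf (last p)) < 2 * K"
      using pre_walk(4)[OF hV] suf_walk(4)[OF lV] unfolding K_def by simp
    moreover have "ext p \<in> full (m + (length (pre (hd p)) + length (suf (last p))))"
      using ext_full[OF p(1) ne[OF p(1)]] by (simp add: add.assoc)
    ultimately show "y \<in> (\<Union>j<2 * K. {..<K} \<times> full (m + j))" unfolding p(2) h_def by blast
  qed
  moreover have "inj_on h (walks m)"
  proof
    fix p1 p2 assume p: "p1 \<in> walks m" "p2 \<in> walks m" "h p1 = h p2"
    have "take m (drop (fst (h p)) (snd (h p))) = p" if "p \<in> walks m" for p
      using that unfolding h_def ext_def walks_def by simp
    then show "p1 = p2" using p by metis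
  qed
  moreover have "finite (\<Union>j<2 * K. {..<K} \<times> full (m + j))" using fin_full by auto
  ultimately have "card (walks m) \<le> card (\<Union>j<2 * K. {..<K} \<times> full (m + j))"
    using card_inj_on_le by blast
  also have "\<dots> \<le> (\<Sum>j<2 * K. card ({..<K} \<times> full (m + j)))" by (rule card_UN_le) simp
  also have "\<dots> = (\<Sum>j<2 * K. K * card (full (m + j)))" by (simp add: card_cartesian_product)
  finally show ?thesis unfolding K_def .
qed

end

lemma vertex_list: assumes "finite V" shows "distinct (vertex_list V) \<and> set (vertex_list V) = V"
proof -
  obtain xs where "set xs = V" "distinct xs" using finite_distinct_list[OF assms] by blast
  then show ?thesis unfolding vertex_list_def by (metis (mono_tags, lifting) someI)
qed

context csys begin

abbreviation N where "N \<equiv> card V"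
abbreviation vs where "vs \<equiv> vertex_list V"
abbreviation A where "A \<equiv> adjacency_mat V E"

lemma vs: "distinct vs" "set vs = V" "length vs = N"
  using vertex_list[OF finV] distinct_card by metis+

lemma A_carrier: "A \<in> carrier_mat N N"
  unfolding adjacency_mat_def Let_def using vs(3) by simp

lemma A_index: "i < N \<Longrightarrow> j < N \<Longrightarrow> A $$ (i, j) = (if E (vs ! i) (vs ! j) then 1 else 0)"
  unfolding adjacency_mat_def Let_def using vs(3) by simp

lemma vs_in: "i < N \<Longrightarrow> vs ! i \<in> V"
  using vs nth_mem by metis

lemma sum_vs: "(\<Sum>l<N. g (vs ! l)) = (\<Sum>z\<in>V. g z)"
proof -
  have "bij_betw ((!) vs) {..<N} V" using bij_betw_nth[OF vs(1)] vs(2,3) by simp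
  then show ?thesis by (rule sum.reindex_bij_betw)
qed

definition S :: "nat \<Rightarrow> ('s \<times> 'a set \<times> nat) \<Rightarrow> ('s \<times> 'a set \<times> nat) \<Rightarrow> ('s \<times> 'a set \<times> nat) list set" where
  "S k x y = {p \<in> walks (Suc k). hd p = x \<and> last p = y}"

lemma fin_S: "finite (S k x y)"
  using fin_walks unfolding S_def by simp

lemma walks1: "walks (Suc 0) = (\<lambda>z. [z]) ` V"
proof (rule Set.set_eqI)
  fix p show "p \<in> walks (Suc 0) \<longleftrightarrow> p \<in> (\<lambda>z. [z]) ` V"
    unfolding walks_def by (cases p) auto
qed

lemma card_S0: "x \<in> V \<Longrightarrow> y \<in> V \<Longrightarrow> card (S 0 x y) = (if x = y then 1 else 0)"
proof -
  assume xy: "x \<in> V" "y \<in> V"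
  have "S 0 x y = (if x = y then {[x]} else {})"
    unfolding S_def walks1 using xy by auto
  then show ?thesis by simp
qed

lemma S_Suc: assumes "y \<in> V"
  shows "S (Suc k) x y = (\<Union>z\<in>{z \<in> V. E z y}. (\<lambda>p. p @ [y]) ` S k x z)"
proof (rule Set.set_eqI, rule iffI)
  fix p assume p: "p \<in> S (Suc k) x y"
  have w: "length p = Suc (Suc k)" "set p \<subseteq> V" "successively E p" "hd p = x" "last p = y"
    using p unfolding S_def walks_def by auto
  define q where "q = butlast p"
  have pq: "p = q @ [y]" using w unfolding q_def by (metis append_butlast_last_id list.size(3) nat.distinct(1))
  have qne: "q \<noteq> []" using w(1) pq by (cases q) auto
  have sq: "successively E q" and Ezy: "E (last q) y"
    using w(3) qne unfolding pq successively_append_iff by auto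
  have "q \<in> walks (Suc k)" using w pq sq unfolding walks_def by auto
  moreover have "hd q = x" using w(4) qne pq by simp
  moreover have "last q \<in> V" using w(2) qne pq by auto
  ultimately show "p \<in> (\<Union>z\<in>{z \<in> V. E z y}. (\<lambda>p. p @ [y]) ` S k x z)"
    unfolding S_def using pq Ezy by blast
next
  fix p assume "p \<in> (\<Union>z\<in>{z \<in> V. E z y}. (\<lambda>p. p @ [y]) ` S k x z)"
  then obtain z q where z: "z \<in> V" "E z y" and q: "q \<in> S k x z" and pq: "p = q @ [y]" by blast
  have w: "length q = Suc k" "set q \<subseteq> V" "successively E q" "hd q = x" "last q = z"
    using q unfolding S_def walks_def by auto
  have qne: "q \<noteq> []" using w(1) by auto
  have "successively E p" unfolding pq successively_append_iff using w z qne by auto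
  then show "p \<in> S (Suc k) x y" unfolding S_def walks_def using pq w assms qne by auto
qed

lemma card_S_Suc: assumes "y \<in> V"
  shows "card (S (Suc k) x y) = (\<Sum>z\<in>V. if E z y then card (S k x z) else 0)"
proof -
  have "card (S (Suc k) x y) = (\<Sum>z\<in>{z \<in> V. E z y}. card ((\<lambda>p. p @ [y]) ` S k x z))"
    unfolding S_Suc[OF assms] using finV fin_S by (intro card_UN_disjoint) (auto simp: S_def)
  also have "\<dots> = (\<Sum>z\<in>{z \<in> V. E z y}. card (S k x z))"
    by (intro sum.cong refl card_image) (auto simp: inj_on_def)
  also have "\<dots> = (\<Sum>z\<in>V. if E z y then card (S k x z) else 0)"
    using finV by (simp add: sum.inter_filter)
  finally show ?thesis .
qed

lemma A_pow:
  "i < N \<Longrightarrow> j < N \<Longrightarrow> (A ^\<^sub>m k) $$ (i, j) = of_nat (card (S k (vs ! i) (vs ! j)))"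
proof (induction k arbitrary: j)
  case 0
  have "dim_row A = N" using A_carrier by simp
  then have "(A ^\<^sub>m 0) $$ (i, j) = (if i = j then 1 else 0)" using 0 by simp
  moreover have "(vs ! i = vs ! j) = (i = j)" using vs 0 nth_eq_iff_index_eq by metis
  ultimately show ?case using card_S0[OF vs_in[OF 0(1)] vs_in[OF 0(2)]] by simp
next
  case (Suc k)
  have Ak: "A ^\<^sub>m k \<in> carrier_mat N N" using pow_carrier_mat[OF A_carrier] .
  have "(A ^\<^sub>m Suc k) $$ (i, j) = (A ^\<^sub>m k * A) $$ (i, j)" by simp
  also have "\<dots> = (\<Sum>l = 0..<N. (A ^\<^sub>m k) $$ (i, l) * A $$ (l, j))"
    using Ak A_carrier Suc.prems by (simp add: scalar_prod_def)
  also have "\<dots> = (\<Sum>l<N. of_nat (if E (vs ! l) (vs ! j) then card (S k (vs ! i) (vs ! l)) else 0))"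
    using Suc.IH Suc.prems A_index by (intro sum.cong) auto
  also have "\<dots> = of_nat (\<Sum>l<N. (if E (vs ! l) (vs ! j) then card (S k (vs ! i) (vs ! l)) else 0))"
    by simp
  also have "(\<Sum>l<N. (if E (vs ! l) (vs ! j) then card (S k (vs ! i) (vs ! l)) else 0)) =
      (\<Sum>z\<in>V. if E z (vs ! j) then card (S k (vs ! i) z) else 0)"
    by (rule sum_vs)
  also have "\<dots> = card (S (Suc k) (vs ! i) (vs ! j))"
    using card_S_Suc[OF vs_in[OF Suc.prems(2)]] by simp
  finally show ?case .
qed

lemma walks_sum: "card (walks (Suc k)) = (\<Sum>x\<in>V. \<Sum>y\<in>V. card (S k x y))"
proof -
  have "walks (Suc k) = (\<Union>x\<in>V. \<Union>y\<in>V. S k x y)"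
  proof (rule Set.set_eqI, rule iffI)
    fix p assume p: "p \<in> walks (Suc k)"
    then have "p \<noteq> []" "set p \<subseteq> V" unfolding walks_def by auto
    then show "p \<in> (\<Union>x\<in>V. \<Union>y\<in>V. S k x y)" using p unfolding S_def by auto
  qed (auto simp: S_def)
  also have "card \<dots> = (\<Sum>x\<in>V. card (\<Union>y\<in>V. S k x y))"
    using finV fin_S by (intro card_UN_disjoint) (auto simp: S_def)
  also have "\<dots> = (\<Sum>x\<in>V. \<Sum>y\<in>V. card (S k x y))"
    using finV fin_S by (intro sum.cong refl card_UN_disjoint) (auto simp: S_def)
  finally show ?thesis .
qed

lemma walks_mat: "real (card (walks (Suc k))) = (\<Sum>i<N. \<Sum>j<N. norm ((A ^\<^sub>m k) $$ (i, j)))"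
proof -
  have "(\<Sum>i<N. \<Sum>j<N. norm ((A ^\<^sub>m k) $$ (i, j))) = (\<Sum>i<N. \<Sum>j<N. real (card (S k (vs ! i) (vs ! j))))"
    using A_pow by (intro sum.cong refl) simp
  also have "\<dots> = (\<Sum>i<N. \<Sum>y\<in>V. real (card (S k (vs ! i) y)))"
    by (intro sum.cong refl) (rule sum_vs)
  also have "\<dots> = (\<Sum>x\<in>V. \<Sum>y\<in>V. real (card (S k x y)))"
    by (rule sum_vs)
  also have "\<dots> = real (card (walks (Suc k)))" unfolding walks_sum by simp
  finally show ?thesis by simp
qed

end

lemma pow_smult_mat:
  fixes B :: "'b :: comm_ring_1 mat"
  assumes B: "B \<in> carrier_mat n n"
  shows "(c \<cdot>\<^sub>m B) ^\<^sub>m k = c ^ k \<cdot>\<^sub>m (B ^\<^sub>m k)"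
proof (induction k)
  case 0
  have "dim_row (c \<cdot>\<^sub>m B) = n" "dim_row B = n" using B by auto
  then show ?case by (intro eq_matI) auto
next
  case (Suc k)
  have Bk: "B ^\<^sub>m k \<in> carrier_mat n n" using pow_carrier_mat[OF B] .
  have "(c \<cdot>\<^sub>m B) ^\<^sub>m Suc k = (c ^ k \<cdot>\<^sub>m (B ^\<^sub>m k)) * (c \<cdot>\<^sub>m B)" using Suc by simp
  also have "\<dots> = c ^ k \<cdot>\<^sub>m ((B ^\<^sub>m k) * (c \<cdot>\<^sub>m B))"
    using Bk B by (intro mult_smult_assoc_mat) auto
  also have "(B ^\<^sub>m k) * (c \<cdot>\<^sub>m B) = c \<cdot>\<^sub>m (B ^\<^sub>m k * B)"
    using Bk B by (intro mult_smult_distrib) auto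
  also have "c ^ k \<cdot>\<^sub>m (c \<cdot>\<^sub>m (B ^\<^sub>m k * B)) = c ^ Suc k \<cdot>\<^sub>m (B ^\<^sub>m Suc k)"
    by (intro eq_matI) (auto simp: mult.assoc mult.commute mult.left_commute)
  finally show ?case .
qed

context csys begin

lemma N_pos: "V \<noteq> {} \<Longrightarrow> 0 < N"
  using finV by (simp add: card_gt_0_iff)

lemma spectral_scaled:
  assumes Vne: "V \<noteq> {}" and t: "spectral_radius A < t"
  shows "spectral_radius (complex_of_real (1 / t) \<cdot>\<^sub>m A) < 1"
proof -
  have t0: "0 < t"
  proof -
    have "spectral_radius A \<in> norm ` spectrum A" using spectral_radius_mem_max(1)[OF A_carrier N_pos[OF Vne]] .
    then have "0 \<le> spectral_radius A" by auto
    then show ?thesis using t by simp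
  qed
  define B where "B = complex_of_real (1 / t) \<cdot>\<^sub>m A"
  have Bc: "B \<in> carrier_mat N N" unfolding B_def using A_carrier by simp
  have "spectral_radius B \<in> norm ` spectrum B" using spectral_radius_mem_max(1)[OF Bc N_pos[OF Vne]] .
  then obtain \<mu> where mu: "eigenvalue B \<mu>" "spectral_radius B = norm \<mu>" unfolding spectrum_def by auto
  then obtain v where ev: "eigenvector B v \<mu>" unfolding eigenvalue_def by auto
  then have v: "v \<in> carrier_vec N" "v \<noteq> 0\<^sub>v N" "B *\<^sub>v v = \<mu> \<cdot>\<^sub>v v"
    unfolding eigenvector_def using Bc by auto
  have "A *\<^sub>v v = (complex_of_real t * \<mu>) \<cdot>\<^sub>v v"
  proof (rule eq_vecI)
    show "dim_vec (A *\<^sub>v v) = dim_vec ((complex_of_real t * \<mu>) \<cdot>\<^sub>v v)" using A_carrier v by simp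
    fix i assume "i < dim_vec ((complex_of_real t * \<mu>) \<cdot>\<^sub>v v)"
    then have i: "i < N" using v by simp
    have dA: "dim_row A = N" "dim_col A = N" "dim_vec v = N" using A_carrier v(1) by auto
    have e1: "vec_index (B *\<^sub>v v) i = \<mu> * vec_index v i" using v(3) i dA(3) by simp
    have e2: "vec_index (B *\<^sub>v v) i = complex_of_real (1 / t) * vec_index (A *\<^sub>v v) i"
      using i dA unfolding B_def
      by (simp add: index_mult_mat_vec scalar_prod_def sum_distrib_left mult.assoc)
    have h1: "vec_index (A *\<^sub>v v) i = complex_of_real t * (complex_of_real (1 / t) * vec_index (A *\<^sub>v v) i)"
      using t0 by simp
    have e3: "complex_of_real (1 / t) * vec_index (A *\<^sub>v v) i = \<mu> * vec_index v i"
      using e2[symmetric] e1 by (rule trans)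
    have "vec_index (A *\<^sub>v v) i = complex_of_real t * (\<mu> * vec_index v i)" using h1[unfolded e3] .
    then show "(A *\<^sub>v v) $ i = ((complex_of_real t * \<mu>) \<cdot>\<^sub>v v) $ i" using i v(1) by simp
  qed
  then have "eigenvector A v (complex_of_real t * \<mu>)" unfolding eigenvector_def using v A_carrier by simp
  then have "eigenvalue A (complex_of_real t * \<mu>)" unfolding eigenvalue_def by auto
  then have "norm (complex_of_real t * \<mu>) \<le> spectral_radius A"
    using spectral_radius_mem_max(2)[OF A_carrier N_pos[OF Vne]] unfolding spectrum_def by auto
  moreover have "norm (complex_of_real t * \<mu>) = t * norm \<mu>" using t0 by (simp add: norm_mult)
  ultimately have "t * norm \<mu> < t" using t by linarith
  then have "norm \<mu> < 1" using t0 mult_less_cancel_left1 by auto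
  then show ?thesis using mu(2) unfolding B_def by simp
qed

lemma walks_upper:
  assumes Vne: "V \<noteq> {}" and t: "spectral_radius A < t"
  shows "\<exists>C. \<forall>k. real (card (walks (Suc k))) \<le> C * t ^ k"
proof -
  have t0: "0 < t"
  proof -
    have "spectral_radius A \<in> norm ` spectrum A" using spectral_radius_mem_max(1)[OF A_carrier N_pos[OF Vne]] .
    then have "0 \<le> spectral_radius A" by auto
    then show ?thesis using t by simp
  qed
  define B where "B = complex_of_real (1 / t) \<cdot>\<^sub>m A"
  have Bc: "B \<in> carrier_mat N N" unfolding B_def using A_carrier by simp
  obtain c where c: "\<forall>k. norm_bound (B ^\<^sub>m k) c"
    using spectral_radius_jnf_norm_bound_less_1_upper_triangular[OF Bc spectral_scaled[OF Vne t, folded B_def]]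
    by blast
  have ent: "norm ((A ^\<^sub>m k) $$ (i, j)) \<le> c * t ^ k" if ij: "i < N" "j < N" for i j k
  proof -
    have "B ^\<^sub>m k = complex_of_real (1 / t) ^ k \<cdot>\<^sub>m (A ^\<^sub>m k)"
      unfolding B_def by (rule pow_smult_mat[OF A_carrier])
    moreover have "dim_row (A ^\<^sub>m k) = N" "dim_col (A ^\<^sub>m k) = N"
      using pow_carrier_mat[OF A_carrier, of k] by auto
    ultimately have "(B ^\<^sub>m k) $$ (i, j) = complex_of_real (1 / t) ^ k * (A ^\<^sub>m k) $$ (i, j)"
      using ij by (simp add: index_smult_mat)
    moreover have "norm ((B ^\<^sub>m k) $$ (i, j)) \<le> c"
    proof -
      have nb: "norm_bound (B ^\<^sub>m k) c" using c by blast
      have dB: "dim_row (B ^\<^sub>m k) = N" "dim_col (B ^\<^sub>m k) = N" using pow_carrier_mat[OF Bc, of k] by auto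
      show ?thesis using nb ij unfolding norm_bound_def dB by blast
    qed
    moreover have "cmod (1 / complex_of_real t) = 1 / t" using t0 by (simp add: norm_divide)
    ultimately have "(1 / t) ^ k * norm ((A ^\<^sub>m k) $$ (i, j)) \<le> c"
      by (simp add: norm_mult norm_power)
    then show ?thesis using t0 by (simp add: field_simps)
  qed
  have "real (card (walks (Suc k))) \<le> real N * real N * c * t ^ k" for k
  proof -
    have "real (card (walks (Suc k))) = (\<Sum>i<N. \<Sum>j<N. norm ((A ^\<^sub>m k) $$ (i, j)))" by (rule walks_mat)
    also have "\<dots> \<le> (\<Sum>i<N. \<Sum>j<N. c * t ^ k)" using ent by (intro sum_mono) auto
    also have "\<dots> = real N * real N * c * t ^ k" by simp
    finally show ?thesis .
  qed
  then show ?thesis by (intro exI[of _ "real N * real N * c"]) auto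
qed

lemma walks_lower:
  assumes Vne: "V \<noteq> {}"
  shows "spectral_radius A ^ k \<le> real (card (walks (Suc k)))"
proof -
  have "spectral_radius A \<in> norm ` spectrum A" using spectral_radius_mem_max(1)[OF A_carrier N_pos[OF Vne]] .
  then obtain lam where lam: "eigenvalue A lam" "spectral_radius A = norm lam" unfolding spectrum_def by auto
  then obtain v where ev: "eigenvector A v lam" unfolding eigenvalue_def by auto
  then have v: "v \<in> carrier_vec N" "v \<noteq> 0\<^sub>v N" unfolding eigenvector_def using A_carrier by auto
  have pw: "A ^\<^sub>m k *\<^sub>v v = lam ^ k \<cdot>\<^sub>v v" using eigenvector_pow[OF A_carrier ev] .
  define M where "M = Max ((\<lambda>j. norm (v $ j)) ` {..<N})"
  have ne: "{..<N} \<noteq> {}" using N_pos[OF Vne] by auto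
  have "M \<in> (\<lambda>j. norm (v $ j)) ` {..<N}" unfolding M_def using ne by (intro Max_in) auto
  then obtain i where i: "i < N" "norm (v $ i) = M" by auto
  have Mge: "norm (v $ j) \<le> M" if "j < N" for j unfolding M_def using that by (intro Max_ge) auto
  have Mpos: "0 < M"
  proof (rule ccontr)
    assume "\<not> 0 < M"
    then have "\<forall>j<N. v $ j = 0" using Mge by (meson norm_le_zero_iff order_trans not_less)
    then have "v = 0\<^sub>v N" using v(1) by (intro eq_vecI) auto
    then show False using v(2) by simp
  qed
  have Ak: "A ^\<^sub>m k \<in> carrier_mat N N" using pow_carrier_mat[OF A_carrier] .
  have dAk: "dim_row (A ^\<^sub>m k) = N" "dim_col (A ^\<^sub>m k) = N" "dim_vec v = N" using Ak v(1) by auto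
  have "vec_index (A ^\<^sub>m k *\<^sub>v v) i = (\<Sum>j<N. (A ^\<^sub>m k) $$ (i, j) * vec_index v j)"
    using i dAk by (simp add: index_mult_mat_vec scalar_prod_def atLeast0LessThan)
  then have "lam ^ k * v $ i = (\<Sum>j<N. (A ^\<^sub>m k) $$ (i, j) * v $ j)"
    using pw i v(1) by simp
  then have "norm lam ^ k * M = norm (\<Sum>j<N. (A ^\<^sub>m k) $$ (i, j) * v $ j)"
    using i(2) by (metis norm_mult norm_power)
  also have "\<dots> \<le> (\<Sum>j<N. norm ((A ^\<^sub>m k) $$ (i, j)) * norm (v $ j))"
    by (rule order_trans[OF norm_sum]) (simp add: norm_mult)
  also have "\<dots> \<le> (\<Sum>j<N. norm ((A ^\<^sub>m k) $$ (i, j)) * M)"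
    using Mge by (intro sum_mono mult_left_mono) auto
  also have "\<dots> = (\<Sum>j<N. norm ((A ^\<^sub>m k) $$ (i, j))) * M" by (simp add: sum_distrib_right)
  finally have "norm lam ^ k \<le> (\<Sum>j<N. norm ((A ^\<^sub>m k) $$ (i, j)))" using Mpos by simp
  also have "\<dots> \<le> (\<Sum>i'<N. \<Sum>j<N. norm ((A ^\<^sub>m k) $$ (i', j)))"
    using i by (intro member_le_sum[of i "{..<N}" "\<lambda>i'. \<Sum>j<N. norm ((A ^\<^sub>m k) $$ (i', j))"])
      (auto intro: sum_nonneg)
  also have "\<dots> = real (card (walks (Suc k)))" by (rule walks_mat[symmetric])
  finally show ?thesis using lam(2) by simp
qed

end

context csys begin

abbreviation rho where "rho \<equiv> digraph_spectral_radius V E"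

abbreviation cnt where "cnt \<alpha> \<beta> n \<equiv> real (trace_count Sg I delta \<alpha> \<beta> n)"

lemma rho_nonneg: "0 \<le> rho"
proof (cases "V = {}")
  case False
  have "spectral_radius A \<in> norm ` spectrum A" using spectral_radius_mem_max(1)[OF A_carrier N_pos[OF False]] .
  then show ?thesis using False unfolding digraph_spectral_radius_def by auto
qed (simp add: digraph_spectral_radius_def)

lemma walks_empty: "V = {} \<Longrightarrow> walks (Suc k) = {}"
  unfolding walks_def by (auto simp: length_Suc_conv)

lemma upper_summable:
  assumes s: "0 < s" "rho * s < 1" and a: "\<alpha> \<in> X"
  shows "summable (\<lambda>n. cnt \<alpha> \<beta> n * s ^ n)"
proof -
  have cw: "cnt \<alpha> \<beta> n \<le> real (card (walks n))" for n using count_le_walks[OF a] by simp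
  have sS: "summable (\<lambda>k. cnt \<alpha> \<beta> (Suc k) * s ^ Suc k)"
  proof (cases "V = {}")
    case True
    then have z: "trace_count Sg I delta \<alpha> \<beta> (Suc k) = 0" for k
      using count_le_walks[OF a, of \<beta> "Suc k"] walks_empty by simp
    have "(\<lambda>k. cnt \<alpha> \<beta> (Suc k) * s ^ Suc k) = (\<lambda>k. 0)" by (rule ext) (simp only: z of_nat_0 mult_zero_left)
    then show ?thesis by simp
  next
    case False
    define t where "t = (spectral_radius A + 1 / s) / 2"
    have rA: "rho = spectral_radius A" using False unfolding digraph_spectral_radius_def by simp
    have lt: "spectral_radius A < 1 / s" using s rA by (simp add: field_simps)
    have tA: "spectral_radius A < t" using lt unfolding t_def by simp
    have ts: "t * s < 1" using lt s unfolding t_def by (simp add: field_simps)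
    have t0: "0 \<le> t" using rho_nonneg rA tA by simp
    obtain C where C: "\<forall>k. real (card (walks (Suc k))) \<le> C * t ^ k" using walks_upper[OF False tA] by blast
    have b: "norm (cnt \<alpha> \<beta> (Suc k) * s ^ Suc k) \<le> C * s * (t * s) ^ k" if "0 \<le> k" for k
    proof -
      have "norm (cnt \<alpha> \<beta> (Suc k) * s ^ Suc k) = cnt \<alpha> \<beta> (Suc k) * s ^ Suc k" using s by simp
      also have "\<dots> \<le> C * t ^ k * s ^ Suc k"
      proof (rule mult_right_mono)
        show "cnt \<alpha> \<beta> (Suc k) \<le> C * t ^ k" using cw[of "Suc k"] C[rule_format, of k] by linarith
      qed (use s in simp)
      also have "\<dots> = C * s * (t * s) ^ k" by (simp add: power_mult_distrib)
      finally show ?thesis .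
    qed
    have sg: "summable (\<lambda>k. C * s * (t * s) ^ k)"
      using ts t0 s by (intro summable_mult summable_geometric) simp
    show ?thesis by (rule summable_comparison_test'[OF sg b])
  qed
  show ?thesis using iffD1[OF summable_Suc_iff[of "\<lambda>n. cnt \<alpha> \<beta> n * s ^ n"] sS] .
qed

definition R :: ereal where "R = (if rho = 0 then \<infinity> else ereal (1 / rho))"

lemma conv_ge: assumes "\<alpha> \<in> X" shows "R \<le> conv_radius (cnt \<alpha> \<beta>)"
proof (rule conv_radius_geI_ex')
  fix r :: real assume r: "0 < r" "ereal r < R"
  have "rho * r < 1"
  proof (cases "rho = 0")
    case False
    then have "r < 1 / rho" using r unfolding R_def by simp
    then show ?thesis using False rho_nonneg by (simp add: field_simps)
  qed simp
  then show "summable (\<lambda>n. cnt \<alpha> \<beta> n * of_real r ^ n)" using upper_summable[OF r(1) _ assms] by simp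
qed

definition T :: "nat \<Rightarrow> real" where "T n = (\<Sum>\<alpha>\<in>X. \<Sum>\<beta>\<in>X. cnt \<alpha> \<beta> n)"

lemma T_nonneg: "0 \<le> T n" unfolding T_def by (intro sum_nonneg) auto

lemma no_summable:
  assumes rp: "0 < rho" and s: "0 < s" "1 < rho * s"
  shows "\<not> summable (\<lambda>n. T n * s ^ n)"
proof
  assume sT: "summable (\<lambda>n. T n * s ^ n)"
  define K where "K = card Sg + 1"
  have Vne: "V \<noteq> {}" using rp unfolding digraph_spectral_radius_def by auto
  have rA: "rho = spectral_radius A" using Vne unfolding digraph_spectral_radius_def by simp
  define G where "G m = (\<Sum>j<2 * K. real K * (T (m + j) * s ^ (m + j)) * (1 / s) ^ j)" for m
  have sG: "summable G" unfolding G_def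
  proof (rule summable_sum)
    fix j assume "j \<in> {..<2 * K}"
    have "summable (\<lambda>m. T (m + j) * s ^ (m + j))" using summable_ignore_initial_segment[OF sT, of j] .
    then show "summable (\<lambda>m. real K * (T (m + j) * s ^ (m + j)) * (1 / s) ^ j)"
      by (intro summable_mult2 summable_mult)
  qed
  have FT: "real (card (full l)) \<le> T l" for l
  proof -
    have "real (card (full l)) \<le> real (\<Sum>\<alpha>\<in>X. \<Sum>\<beta>\<in>X. trace_count Sg I delta \<alpha> \<beta> l)"
      using full_le_T[of l] by (simp only: of_nat_le_iff)
    then show ?thesis unfolding T_def by simp
  qed
  have bound: "norm (real (card (walks m)) * s ^ m) \<le> G m" if m: "1 \<le> m" for m
  proof -
    have "real (card (walks m)) \<le> real (\<Sum>j<2 * K. K * card (full (m + j)))"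
      using walks_le_full[OF m] unfolding K_def by (simp only: of_nat_le_iff)
    also have "\<dots> = (\<Sum>j<2 * K. real K * real (card (full (m + j))))" by simp
    also have "\<dots> \<le> (\<Sum>j<2 * K. real K * T (m + j))"
      using FT by (intro sum_mono mult_left_mono) auto
    finally have "real (card (walks m)) * s ^ m \<le> (\<Sum>j<2 * K. real K * T (m + j)) * s ^ m"
      using s by (intro mult_right_mono) auto
    also have "\<dots> = G m" unfolding G_def sum_distrib_right
    proof (intro sum.cong refl)
      fix j
      have "s ^ m = s ^ (m + j) * (1 / s) ^ j" using s by (simp add: power_add power_one_over)
      then show "real K * T (m + j) * s ^ m = real K * (T (m + j) * s ^ (m + j)) * (1 / s) ^ j"
        by (simp add: mult.assoc)
    qed
    finally show ?thesis using s by simp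
  qed
  have "summable (\<lambda>m. real (card (walks m)) * s ^ m)"
    by (rule summable_comparison_test'[OF sG bound])
  then have "(\<lambda>m. real (card (walks m)) * s ^ m) \<longlonglongrightarrow> 0" by (rule summable_LIMSEQ_zero)
  then have "(\<lambda>k. real (card (walks (Suc k))) * s ^ Suc k) \<longlonglongrightarrow> 0" by (rule LIMSEQ_Suc)
  then have "eventually (\<lambda>k. real (card (walks (Suc k))) * s ^ Suc k < s) sequentially"
    using s by (intro order_tendstoD(2)) auto
  then obtain k where k: "real (card (walks (Suc k))) * s ^ Suc k < s"
    by (auto simp: eventually_sequentially)
  have "s \<le> s * (rho * s) ^ k" using s by (simp add: one_le_power)
  also have "\<dots> = rho ^ k * s ^ Suc k" by (simp add: power_mult_distrib)
  also have "\<dots> \<le> real (card (walks (Suc k))) * s ^ Suc k"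
    using walks_lower[OF Vne, of k] rA s by (intro mult_right_mono) auto
  finally show False using k by simp
qed

lemma main:
  shows "characteristic_root Sg I X delta = R"
proof (rule antisym)
  show "R \<le> characteristic_root Sg I X delta"
    unfolding characteristic_root_def
  proof (rule INF_greatest)
    fix \<alpha> assume a: "\<alpha> \<in> X"
    show "R \<le> (INF \<beta>\<in>X. conv_radius (cnt \<alpha> \<beta>))"
    proof (rule INF_greatest)
      fix \<beta> assume "\<beta> \<in> X"
      show "R \<le> conv_radius (cnt \<alpha> \<beta>)" by (rule conv_ge[OF a])
    qed
  qed
  show "characteristic_root Sg I X delta \<le> R"
  proof (cases "rho = 0")
    case True then show ?thesis unfolding R_def by simp
  next
    case False
    then have rp: "0 < rho" using rho_nonneg by simp
    show ?thesis
    proof (rule ccontr)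
      assume "\<not> characteristic_root Sg I X delta \<le> R"
      then have "R < characteristic_root Sg I X delta" by simp
      then obtain s where s: "R < ereal s" "ereal s < characteristic_root Sg I X delta"
        using ereal_dense2 by blast
      have s1: "1 / rho < s" using s(1) False unfolding R_def by simp
      have "0 < 1 / rho" using rp by simp
      then have s0: "0 < s" using s1 by linarith
      have "1 < rho * s" using s1 rp by (simp add: field_simps)
      have sm: "summable (\<lambda>n. cnt \<alpha> \<beta> n * s ^ n)" if "\<alpha> \<in> X" "\<beta> \<in> X" for \<alpha> \<beta>
      proof (rule summable_in_conv_radius)
        have "characteristic_root Sg I X delta \<le> (INF \<beta>\<in>X. conv_radius (cnt \<alpha> \<beta>))"
          unfolding characteristic_root_def by (rule INF_lower[OF that(1)])
        also have "\<dots> \<le> conv_radius (cnt \<alpha> \<beta>)" by (rule INF_lower[OF that(2)])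
        finally have "characteristic_root Sg I X delta \<le> conv_radius (cnt \<alpha> \<beta>)" .
        then show "ereal (norm s) < conv_radius (cnt \<alpha> \<beta>)" using s(2) s0 by simp
      qed
      have "summable (\<lambda>n. \<Sum>\<alpha>\<in>X. \<Sum>\<beta>\<in>X. cnt \<alpha> \<beta> n * s ^ n)"
        using sm by (intro summable_sum) auto
      then have "summable (\<lambda>n. T n * s ^ n)" unfolding T_def by (simp add: sum_distrib_right)
      then show False using no_summable[OF rp s0 \<open>1 < rho * s\<close>] by simp
    qed
  qed
qed

end

theorem proposition5:
  fixes Sg :: "'a set" and I :: "('a \<times> 'a) set" and X :: "'s set"
    and delta :: "'s option \<Rightarrow> 'a \<Rightarrow> 's option"
  assumes "concurrent_system Sg I X delta"
  defines "r \<equiv> characteristic_root Sg I X delta"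
    and "\<rho> \<equiv> digraph_spectral_radius (ADSC_nodes Sg I X delta) (ADSC_arc Sg I X delta)"
  shows "(\<rho> \<noteq> 0 \<longrightarrow> r = ereal (1 / \<rho>)) \<and> (\<rho> = 0 \<longrightarrow> r = \<infinity>)"
proof -
  interpret csys Sg I X delta by unfold_locales (rule assms(1))
  have "r = R" unfolding r_def by (rule main)
  then show ?thesis unfolding R_def \<rho>_def by simp
qed

end
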